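(* For $\epsilon>0$ sufficiently small, $R_\pi^\natural(S^1\times D^2,A_1)$ is homeomorphic to $S^2$. Explicitly, with $(\phi,\theta)$, $\phi\in[0,\pi]$, $\theta\in[0,2\pi]$, spherical-polar coordinates on $S^2$ and $\nu=\epsilon\sin\phi$, the map sending $(\phi,\theta)$ to the class of $$a=i\sigma_z,\qquad h=(\cos^2\nu+\sin^2\nu\sin^2\theta)^{-1/2}\big(i\sigma_x\cos\nu-i\sigma_z\sin\nu\sin\theta\big),$$ $$A=h\big(\cos\phi+i\sin\phi(\sigma_x\cos\theta+\sigma_y\sin\theta)\big),\qquad B=\cos\nu+i\sin\nu(\sigma_x\cos\theta+\sigma_y\sin\theta),$$ $$b=-ha^{-1}h^{-1},\qquad w=-1,$$ is a well-defined homeomorphism $S^2\to R_\pi^\natural(S^1\times D^2,A_1)$.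
   Context: Pauli matrices standard; $\hat r\cdot\vec\sigma=r_x\sigma_x+r_y\sigma_y+r_z\sigma_z$. Fix $\epsilon>0$. $R_\pi^\natural(S^1\times D^2,A_1)$ is the holonomy-perturbed traceless character variety of a solid torus containing an unknotted arc $A_1$, a meridional loop $H$ around it, an arc $W$ from $A_1$ to $H$, and a perturbation loop $P$; the fundamental group of the complement is $\langle A,B,a,b,h,w\mid hwaB=aBh,\ b=ha^{-1}w^{-1}h^{-1}\rangle$, and the longitude and meridian of a tubular neighborhood of $P$ are $\lambda_P=h^{-1}A$ and $\mu_P=B$. Concretely, $R_\pi^\natural(S^1\times D^2,A_1)$ is the space of tuples $(A,B,a,b,h,w)\in SU(2)^6$ with $\operatorname{tr}a=\operatorname{tr}h=0$, $w=-1$, $hwaB=aBh$, $b=ha^{-1}w^{-1}h^{-1}$, and such that whenever $h^{-1}A=\cos\phi+i\sin\phi\,\hat r\cdot\vec\sigma$ with $\phi\in\mathbb{R}$, $\hat r\in S^2$, one has $B=\cos\nu+i\sin\nu\,\hat r\cdot\vec\sigma$ with $\nu=\epsilon\sin\phi$; modulo simultaneous conjugation, with the quotient topology. *)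

theory Defs
  imports "HOL-Analysis.Analysis"
begin

type_synonym cmat = "complex^2^2"

definition mat2 :: "complex \<Rightarrow> complex \<Rightarrow> complex \<Rightarrow> complex \<Rightarrow> cmat" where
  "mat2 a b c d = (\<chi> i j. if i = 1 then (if j = 1 then a else b) else (if j = 1 then c else d))"

definition sigma_x :: cmat where "sigma_x = mat2 0 1 1 0"
definition sigma_y :: cmat where "sigma_y = mat2 0 (- \<i>) \<i> 0"
definition sigma_z :: cmat where "sigma_z = mat2 1 0 0 (-1)"

definition csc :: "complex \<Rightarrow> cmat \<Rightarrow> cmat" where
  "csc c M = (\<chi> i j. c * M$i$j)"

definition ctrans :: "cmat \<Rightarrow> cmat" where
  "ctrans M = (\<chi> i j. cnj (M$j$i))"

definition SU2 :: "cmat set" where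
  "SU2 = {U. U ** ctrans U = mat 1 \<and> det U = 1}"

definition quat :: "real \<Rightarrow> real \<Rightarrow> real \<Rightarrow> real \<Rightarrow> cmat" where
  "quat c x y z = csc (complex_of_real c) (mat 1)
     + csc \<i> (csc (complex_of_real x) sigma_x + csc (complex_of_real y) sigma_y
              + csc (complex_of_real z) sigma_z)"

type_synonym tup = "cmat \<times> cmat \<times> cmat \<times> cmat \<times> cmat \<times> cmat"

text \<open>The (unquotiented) set of representations defining the perturbed traceless
  character variety of (S^1 x D^2, A_1), with perturbation parameter eps.\<close>
definition Rep :: "real \<Rightarrow> tup set" where
  "Rep eps = {(A, B, a, b, h, w).
      A \<in> SU2 \<and> B \<in> SU2 \<and> a \<in> SU2 \<and> b \<in> SU2 \<and> h \<in> SU2 \<and> w \<in> SU2 \<and>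
      trace a = 0 \<and> trace h = 0 \<and> w = - mat 1 \<and>
      h ** w ** a ** B = a ** B ** h \<and>
      b = h ** matrix_inv a ** matrix_inv w ** matrix_inv h \<and>
      (\<forall>(\<phi>::real) (r::real^3). r \<in> sphere 0 1 \<and>
          matrix_inv h ** A = quat (cos \<phi>) (sin \<phi> * r$1) (sin \<phi> * r$2) (sin \<phi> * r$3)
        \<longrightarrow> (let \<nu> = eps * sin \<phi> in
              B = quat (cos \<nu>) (sin \<nu> * r$1) (sin \<nu> * r$2) (sin \<nu> * r$3)))}"

definition conj_tup :: "cmat \<Rightarrow> tup \<Rightarrow> tup" where
  "conj_tup g = (\<lambda>(A, B, a, b, h, w).
     (g ** A ** matrix_inv g, g ** B ** matrix_inv g, g ** a ** matrix_inv g,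
      g ** b ** matrix_inv g, g ** h ** matrix_inv g, g ** w ** matrix_inv g))"

definition conj_rel :: "tup set \<Rightarrow> (tup \<times> tup) set" where
  "conj_rel X = {(x, y). x \<in> X \<and> y \<in> X \<and> (\<exists>g\<in>SU2. y = conj_tup g x)}"

definition quotient_topology :: "'a topology \<Rightarrow> ('a \<times> 'a) set \<Rightarrow> 'a set topology" where
  "quotient_topology X r = topology (\<lambda>U. U \<subseteq> topspace X // r \<and> openin X (\<Union>U))"

definition charvar :: "real \<Rightarrow> tup set topology" where
  "charvar eps = quotient_topology (subtopology euclidean (Rep eps)) (conj_rel (Rep eps))"

definition sph :: "real \<Rightarrow> real \<Rightarrow> real^3" where
  "sph \<phi> \<theta> = vector [sin \<phi> * cos \<theta>, sin \<phi> * sin \<theta>, cos \<phi>]"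

definition param :: "real \<Rightarrow> real \<Rightarrow> real \<Rightarrow> tup" where
  "param eps \<phi> \<theta> =
     (let \<nu> = eps * sin \<phi>;
          a = csc \<i> sigma_z;
          h = csc (complex_of_real (1 / sqrt ((cos \<nu>)\<^sup>2 + (sin \<nu>)\<^sup>2 * (sin \<theta>)\<^sup>2)))
                (csc (\<i> * complex_of_real (cos \<nu>)) sigma_x
                 - csc (\<i> * complex_of_real (sin \<nu> * sin \<theta>)) sigma_z);
          A = h ** quat (cos \<phi>) (sin \<phi> * cos \<theta>) (sin \<phi> * sin \<theta>) 0;
          B = quat (cos \<nu>) (sin \<nu> * cos \<theta>) (sin \<nu> * sin \<theta>) 0;
          b = - (h ** matrix_inv a ** matrix_inv h);
          w = - mat 1
      in (A, B, a, b, h, w))"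

end

theory Submission
  imports Defs
begin

lemma cmat_eq_iff: "(M::cmat) = N \<longleftrightarrow> M$1$1 = N$1$1 \<and> M$1$2 = N$1$2 \<and> M$2$1 = N$2$1 \<and> M$2$2 = N$2$2"
  by (auto simp: vec_eq_iff forall_2)

lemma mat2_nth[simp]: "mat2 a b c d $1$1 = a" "mat2 a b c d $1$2 = b" "mat2 a b c d $2$1 = c" "mat2 a b c d $2$2 = d"
  by (simp_all add: mat2_def)

lemma quat_nth[simp]:
  "quat c x y z $1$1 = Complex c z" "quat c x y z $1$2 = Complex y x"
  "quat c x y z $2$1 = Complex (-y) x" "quat c x y z $2$2 = Complex c (-z)"
  by (simp_all add: quat_def csc_def sigma_x_def sigma_y_def sigma_z_def mat_def complex_eq_iff)

lemma quat_eq_iff: "quat c x y z = quat c' x' y' z' \<longleftrightarrow> c = c' \<and> x = x' \<and> y = y' \<and> z = z'"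
  by (auto simp: cmat_eq_iff)

definition qmul :: "real\<times>real\<times>real\<times>real \<Rightarrow> real\<times>real\<times>real\<times>real \<Rightarrow> real\<times>real\<times>real\<times>real" where
 "qmul p q = (case p of (a1,b1,c1,d1) \<Rightarrow> case q of (a2,b2,c2,d2) \<Rightarrow>
   (a1*a2-b1*b2-c1*c2-d1*d2, a1*b2+a2*b1-(c1*d2-d1*c2), a1*c2+a2*c1-(d1*b2-b1*d2), a1*d2+a2*d1-(b1*c2-c1*b2)))"

definition Q :: "real\<times>real\<times>real\<times>real \<Rightarrow> cmat" where
 "Q p = (case p of (c,x,y,z) \<Rightarrow> quat c x y z)"

lemma matmul_nth2: "((M::cmat) ** N)$i$j = M$i$1 * N$1$j + M$i$2 * N$2$j"
  by (simp add: matrix_matrix_mult_def sum_2)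

lemma Q_mult: "Q p ** Q q = Q (qmul p q)"
  by (cases p; cases q; simp add: Q_def qmul_def cmat_eq_iff matmul_nth2 complex_eq_iff algebra_simps)


definition qconj :: "real\<times>real\<times>real\<times>real \<Rightarrow> real\<times>real\<times>real\<times>real" where
 "qconj p = (case p of (c,x,y,z) \<Rightarrow> (c,-x,-y,-z))"
definition nq :: "real\<times>real\<times>real\<times>real \<Rightarrow> real" where
 "nq p = (case p of (c,x,y,z) \<Rightarrow> c^2+x^2+y^2+z^2)"

lemma Q_eq_iff: "Q p = Q q \<longleftrightarrow> p = q"
  by (cases p; cases q; simp add: Q_def quat_eq_iff)

lemma mat1_Q: "(mat 1 :: cmat) = Q (1,0,0,0)"
  by (simp add: Q_def cmat_eq_iff mat_def complex_eq_iff)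

lemma neg_Q: "- Q p = Q (case p of (c,x,y,z) \<Rightarrow> (-c,-x,-y,-z))"
  by (cases p; simp add: Q_def cmat_eq_iff complex_eq_iff)

lemma ctrans_Q: "ctrans (Q p) = Q (qconj p)"
  by (cases p; simp add: Q_def qconj_def cmat_eq_iff ctrans_def complex_eq_iff)

lemma det_Q: "det (Q p) = complex_of_real (nq p)"
  by (cases p; simp add: Q_def nq_def det_2 complex_eq_iff power2_eq_square)

lemma trace_Q: "trace (Q p) = complex_of_real (2 * fst p)"
  by (cases p; simp add: Q_def trace_def sum_2 complex_eq_iff)

lemma qmul_conj_self: "qmul p (qconj p) = (nq p,0,0,0)" "qmul (qconj p) p = (nq p,0,0,0)"
  by (cases p; simp add: qmul_def qconj_def nq_def power2_eq_square)+

lemma Q_SU2: "nq p = 1 \<Longrightarrow> Q p \<in> SU2"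
  by (simp add: SU2_def ctrans_Q Q_mult qmul_conj_self mat1_Q det_Q)

lemma SU2_Q: assumes "U \<in> SU2" shows "\<exists>p. U = Q p \<and> nq p = 1"
proof -
  define a where "a = U$1$1" define b where "b = U$1$2"
  define c where "c = U$2$1" define d where "d = U$2$2"
  have m: "U ** ctrans U = mat 1" and dt: "det U = 1" using assms by (auto simp: SU2_def)
  have e1: "a * cnj a + b * cnj b = 1"
    using arg_cong[OF m, of "\<lambda>M. M$1$1"] by (simp add: matmul_nth2 ctrans_def mat_def a_def b_def)
  have e2: "a * cnj c + b * cnj d = 0"
    using arg_cong[OF m, of "\<lambda>M. M$1$2"] by (simp add: matmul_nth2 ctrans_def mat_def a_def b_def c_def d_def)
  have e3: "a * d - b * c = 1" using dt by (simp add: det_2 a_def b_def c_def d_def)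
  have "cnj (a * cnj c + b * cnj d) = 0" using e2 by simp
  hence e2': "cnj a * c = - (cnj b * d)" by (simp add: add_eq_0_iff2 mult.commute)
  have d1: "(a * cnj a + b * cnj b) * d = cnj a * (a*d - b*c)"
    using e2' by (simp add: ring_distribs mult.commute mult.left_commute)
  have dd: "d = cnj a" using d1 e1 e3 by simp
  have c1: "- (a * cnj a + b * cnj b) * c = cnj b * (a*d - b*c)"
    using e2' by (simp add: ring_distribs mult.commute mult.left_commute)
  have "- c = cnj b" using c1 e1 e3 by simp
  hence cc: "c = - cnj b" by (metis minus_minus)
  let ?p = "(Re a, Im b, Re b, Im a)"
  have "U = Q ?p" using dd cc by (simp add: cmat_eq_iff Q_def a_def b_def c_def d_def complex_eq_iff)
  moreover have "nq ?p = 1"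
  proof -
    have "Re (a * cnj a + b * cnj b) = 1" using e1 by simp
    thus ?thesis by (simp add: nq_def power2_eq_square)
  qed
  ultimately show ?thesis by blast
qed

lemma SU2_iff: "U \<in> SU2 \<longleftrightarrow> (\<exists>p. U = Q p \<and> nq p = 1)"
  using SU2_Q Q_SU2 by blast

lemma matrix_inv_unique: fixes M N :: cmat assumes "M ** N = mat 1" "N ** M = mat 1" shows "matrix_inv M = N"
proof -
  have ex: "\<exists>N'. M ** N' = mat 1 \<and> N' ** M = mat 1" using assms by blast
  obtain N' where N': "matrix_inv M = N'" "M ** N' = mat 1" "N' ** M = mat 1"
    using someI_ex[OF ex] unfolding matrix_inv_def by blast
  have "N' = N' ** (M ** N)" using assms by (simp add: matrix_mul_rid)
  also have "\<dots> = N" by (simp add: matrix_mul_assoc N' matrix_mul_lid)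
  finally show ?thesis using N' by simp
qed

lemma matrix_inv_Q: "nq p = 1 \<Longrightarrow> matrix_inv (Q p) = Q (qconj p)"
  by (rule matrix_inv_unique) (simp_all add: Q_mult qmul_conj_self mat1_Q)


lemma nq_qmul: "nq (qmul p q) = nq p * nq q"
  by (cases p rule: prod_cases4; cases q rule: prod_cases4) (simp add: nq_def qmul_def power2_eq_square algebra_simps)

lemma qmul_assoc: "qmul (qmul p q) r = qmul p (qmul q r)"
  by (cases p; cases q; cases r; simp add: qmul_def algebra_simps)

lemma sphere3: "p \<in> sphere (0::real^3) 1 \<longleftrightarrow> (p$1)^2+(p$2)^2+(p$3)^2 = 1"
  by (simp add: norm_vec_def L2_set_def sum_3)

definition sg :: "real \<Rightarrow> real \<Rightarrow> real" where "sg ep r = (if r = 0 then ep else sin (ep * r) / r)"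

lemma sg_mult: "sg e s * s = sin (e * s)"
  by (simp add: sg_def)

definition pg :: "real \<Rightarrow> real \<Rightarrow> real \<Rightarrow> real \<Rightarrow> real \<Rightarrow> real \<Rightarrow> real \<Rightarrow> tup" where
 "pg nu t z x y u1 u2 = (let a = csc \<i> sigma_z;
    h = csc (complex_of_real (1 / sqrt ((cos nu)\<^sup>2 + t\<^sup>2)))
                (csc (\<i> * complex_of_real (cos nu)) sigma_x - csc (\<i> * complex_of_real t) sigma_z);
    A = h ** quat z x y 0; B = quat (cos nu) u1 u2 0;
    b = - (h ** matrix_inv a ** matrix_inv h); w = - mat 1 in (A, B, a, b, h, w))"

definition Pm :: "real \<Rightarrow> real^3 \<Rightarrow> tup" where
 "Pm e p = (let s = sqrt((p$1)\<^sup>2+(p$2)\<^sup>2) in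
    pg (e * s) (sg e s * p$2) (p$3) (p$1) (p$2) (sg e s * p$1) (sg e s * p$2))"

lemma param_Pm: assumes "0 \<le> \<phi>" "\<phi> \<le> pi" shows "param e \<phi> \<theta> = Pm e (sph \<phi> \<theta>)"
proof -
  have s: "sqrt ((sin \<phi> * cos \<theta>)\<^sup>2 + (sin \<phi> * sin \<theta>)\<^sup>2) = sin \<phi>"
  proof -
    have "(sin \<phi> * cos \<theta>)\<^sup>2 + (sin \<phi> * sin \<theta>)\<^sup>2 = (sin \<phi>)\<^sup>2"
      by (simp add: power_mult_distrib flip: distrib_left)
    thus ?thesis using sin_ge_zero[OF assms] by simp
  qed
  have t: "sg e (sin \<phi>) * (sin \<phi> * sin \<theta>) = sin (e * sin \<phi>) * sin \<theta>"
    using sg_mult[of e "sin \<phi>"] by (simp add: mult.assoc[symmetric])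
  have t2: "sg e (sin \<phi>) * (sin \<phi> * cos \<theta>) = sin (e * sin \<phi>) * cos \<theta>"
    using sg_mult[of e "sin \<phi>"] by (simp add: mult.assoc[symmetric])
  show ?thesis
    unfolding param_def Pm_def pg_def sph_def Let_def vector_3 s t t2
    by (simp add: power_mult_distrib)
qed

lemma pg_Q:
  fixes nu t z x y u1 u2 :: real
  assumes "cos nu > 0"
  defines "N \<equiv> sqrt((cos nu)\<^sup>2+t\<^sup>2)"
  defines "hq \<equiv> (0, cos nu/N, 0, -t/N)"
  shows "pg nu t z x y u1 u2 = (Q(qmul hq (z,x,y,0)), Q(cos nu,u1,u2,0), Q(0,0,0,1),
           Q(qmul (qmul hq (0,0,0,1)) (qconj hq)), Q hq, Q(-1,0,0,0))"
proof -
  have Npos: "N > 0" unfolding N_def using assms by (simp add: add_pos_nonneg)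
  have N2: "N^2 = (cos nu)\<^sup>2+t\<^sup>2" unfolding N_def by simp
  have D: "(cos nu)\<^sup>2+t\<^sup>2 > 0" using assms by (simp add: add_pos_nonneg)
  have "nq hq = ((cos nu)\<^sup>2+t\<^sup>2)/N^2" by (simp add: hq_def nq_def power_divide add_divide_distrib)
  hence nh: "nq hq = 1" using N2 D assms by simp
  have h: "csc (complex_of_real (1 / N)) (csc (\<i> * complex_of_real (cos nu)) sigma_x - csc (\<i> * complex_of_real t) sigma_z) = Q hq"
    unfolding hq_def by (simp add: Q_def cmat_eq_iff csc_def sigma_x_def sigma_z_def complex_eq_iff)
  have a: "csc \<i> sigma_z = Q(0,0,0,1)"
    by (simp add: Q_def cmat_eq_iff csc_def sigma_z_def complex_eq_iff)
  have ia: "matrix_inv (Q(0,0,0,1)) = Q(0,0,0,-1)" by (subst matrix_inv_Q) (simp_all add: nq_def qconj_def)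
  have ih: "matrix_inv (Q hq) = Q (qconj hq)" using nh by (simp add: matrix_inv_Q)
  have b: "- (Q hq ** Q(0,0,0,-1) ** Q (qconj hq)) = Q(qmul (qmul hq (0,0,0,1)) (qconj hq))"
    unfolding Q_mult neg_Q Q_eq_iff by (simp add: hq_def qmul_def qconj_def)
  have w: "- mat 1 = Q(-1,0,0,0)" by (simp add: mat1_Q neg_Q)
  have qz: "quat z x y 0 = Q(z,x,y,0)" "quat (cos nu) u1 u2 0 = Q(cos nu,u1,u2,0)" by (simp_all add: Q_def)
  show ?thesis unfolding pg_def Let_def N_def[symmetric] h a ia ih b w qz
    by (simp add: Q_mult)
qed


lemma qmul_one: "qmul (1,0,0,0) p = p" "qmul p (1,0,0,0) = p"
  by (cases p rule: prod_cases4; simp add: qmul_def)+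

lemma qconj_mul_cancel: "nq h = 1 \<Longrightarrow> qmul (qconj h) (qmul h p) = p"
  by (simp add: qmul_assoc[symmetric] qmul_conj_self qmul_one)

lemma Pm_Q:
  assumes e: "0 < e" "e < 1/2" and p: "p \<in> sphere 0 1"
  shows "\<exists>\<alpha> \<beta> B' b'. \<alpha> > 0 \<and> nq (0,\<alpha>,0,\<beta>) = 1 \<and> Pm e p = (Q(qmul (0,\<alpha>,0,\<beta>) (p$3,p$1,p$2,0)), Q B', Q(0,0,0,1), Q b', Q (0,\<alpha>,0,\<beta>), Q(-1,0,0,0))"
proof -
  define x where "x = p$1" define y where "y = p$2" define z where "z = p$3"
  have sp: "x\<^sup>2+y\<^sup>2+z\<^sup>2 = 1" using p unfolding sphere3 x_def y_def z_def .
  define s where "s = sqrt(x\<^sup>2+y\<^sup>2)"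
  define \<sigma> where "\<sigma> = sg e s"
  define \<nu> where "\<nu> = e * s"
  have s0: "s \<ge> 0" unfolding s_def by simp
  have s2: "s\<^sup>2 = x\<^sup>2+y\<^sup>2" unfolding s_def by simp
  have xy1: "x\<^sup>2+y\<^sup>2 \<le> 1" using sp zero_le_power2[of z] by linarith
  have s1: "s \<le> 1" unfolding s_def using xy1 by simp
  have nu0: "0 \<le> \<nu>" unfolding \<nu>_def using e s0 by simp
  have nu1: "\<nu> < 1/2" unfolding \<nu>_def using e s0 s1 mult_le_cancel_left_pos[of e s 1] by linarith
  have cpos: "cos \<nu> > 0" using nu0 nu1 pi_gt3 by (intro cos_gt_zero_pi) linarith+
  have ss: "\<sigma> * s = sin \<nu>" unfolding \<sigma>_def \<nu>_def by (rule sg_mult)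
  define N where "N = sqrt((cos \<nu>)\<^sup>2+(\<sigma>*y)\<^sup>2)"
  define hq where "hq = (0::real, cos \<nu>/N, 0::real, -(\<sigma>*y)/N)"
  have Npos: "N > 0" unfolding N_def using cpos by (simp add: add_pos_nonneg)
  have N2: "N^2 = (cos \<nu>)\<^sup>2+(\<sigma>*y)\<^sup>2" unfolding N_def by simp
  have D: "(cos \<nu>)\<^sup>2+(\<sigma>*y)\<^sup>2 > 0" using cpos by (simp add: add_pos_nonneg)
  have "nq hq = ((cos \<nu>)\<^sup>2+(\<sigma>*y)\<^sup>2)/N^2" by (simp add: hq_def nq_def power_divide add_divide_distrib)
  hence nh: "nq hq = 1" using N2 D cpos by simp
  have PQ: "Pm e p = (Q(qmul hq (z,x,y,0)), Q(cos \<nu>,\<sigma>*x,\<sigma>*y,0), Q(0,0,0,1),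
           Q(qmul (qmul hq (0,0,0,1)) (qconj hq)), Q hq, Q(-1,0,0,0))"
    unfolding Pm_def Let_def x_def[symmetric] y_def[symmetric] z_def[symmetric] s_def[symmetric]
      \<sigma>_def[symmetric] \<nu>_def[symmetric] hq_def N_def
    by (rule pg_Q[OF cpos])
  have "cos \<nu>/N > 0" using cpos Npos by simp
  thus ?thesis using PQ nh unfolding hq_def x_def y_def z_def by blast
qed

lemma Pm_Rep:
  assumes e: "0 < e" "e < 1/2" and p: "p \<in> sphere 0 1"
  shows "Pm e p \<in> Rep e"
proof -
  define x where "x = p$1" define y where "y = p$2" define z where "z = p$3"
  have sp: "x\<^sup>2+y\<^sup>2+z\<^sup>2 = 1" using p unfolding sphere3 x_def y_def z_def .
  define s where "s = sqrt(x\<^sup>2+y\<^sup>2)"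
  define \<sigma> where "\<sigma> = sg e s"
  define \<nu> where "\<nu> = e * s"
  have s0: "s \<ge> 0" unfolding s_def by simp
  have s2: "s\<^sup>2 = x\<^sup>2+y\<^sup>2" unfolding s_def by simp
  have xy1: "x\<^sup>2+y\<^sup>2 \<le> 1" using sp zero_le_power2[of z] by linarith
  have s1: "s \<le> 1" unfolding s_def using xy1 by simp
  have nu0: "0 \<le> \<nu>" unfolding \<nu>_def using e s0 by simp
  have nu1: "\<nu> < 1/2" unfolding \<nu>_def using e s0 s1 mult_le_cancel_left_pos[of e s 1] by linarith
  have cpos: "cos \<nu> > 0" using nu0 nu1 pi_gt3 by (intro cos_gt_zero_pi) linarith+
  have ss: "\<sigma> * s = sin \<nu>" unfolding \<sigma>_def \<nu>_def by (rule sg_mult)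
  define N where "N = sqrt((cos \<nu>)\<^sup>2+(\<sigma>*y)\<^sup>2)"
  define hq where "hq = (0::real, cos \<nu>/N, 0::real, -(\<sigma>*y)/N)"
  have Npos: "N > 0" unfolding N_def using cpos by (simp add: add_pos_nonneg)
  have N2: "N^2 = (cos \<nu>)\<^sup>2+(\<sigma>*y)\<^sup>2" unfolding N_def by simp
  have D: "(cos \<nu>)\<^sup>2+(\<sigma>*y)\<^sup>2 > 0" using cpos by (simp add: add_pos_nonneg)
  have "nq hq = ((cos \<nu>)\<^sup>2+(\<sigma>*y)\<^sup>2)/N^2" by (simp add: hq_def nq_def power_divide add_divide_distrib)
  hence nh: "nq hq = 1" using N2 D cpos by simp
  have nB: "nq (cos \<nu>, \<sigma>*x, \<sigma>*y, 0) = 1"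
  proof -
    have "(\<sigma>*x)\<^sup>2 + (\<sigma>*y)\<^sup>2 = (sin \<nu>)\<^sup>2"
    proof (cases "s = 0")
      case True then have "x = 0" "y = 0" using s2 by (auto simp: add_nonneg_eq_0_iff)
      then show ?thesis using True \<nu>_def by simp
    next
      case False
      have "(\<sigma>*x)\<^sup>2 + (\<sigma>*y)\<^sup>2 = (\<sigma> * s)\<^sup>2" using s2 by (simp add: power_mult_distrib distrib_left)
      then show ?thesis using ss by simp
    qed
    thus ?thesis by (simp add: nq_def add.assoc)
  qed
  have PQ: "Pm e p = (Q(qmul hq (z,x,y,0)), Q(cos \<nu>,\<sigma>*x,\<sigma>*y,0), Q(0,0,0,1),
           Q(qmul (qmul hq (0,0,0,1)) (qconj hq)), Q hq, Q(-1,0,0,0))"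
    unfolding Pm_def Let_def x_def[symmetric] y_def[symmetric] z_def[symmetric] s_def[symmetric]
      \<sigma>_def[symmetric] \<nu>_def[symmetric] hq_def N_def
    by (rule pg_Q[OF cpos])
  have w: "Q(-1,0,0,0) = - mat 1" by (simp add: mat1_Q neg_Q)
  have ih: "matrix_inv (Q hq) = Q (qconj hq)" using nh by (simp add: matrix_inv_Q)
  have ia: "matrix_inv (Q(0,0,0,1)) = Q(0,0,0,-1)" by (subst matrix_inv_Q) (simp_all add: nq_def qconj_def)
  have iw: "matrix_inv (Q(-1,0,0,0)) = Q(-1,0,0,0)" by (subst matrix_inv_Q) (simp_all add: nq_def qconj_def)
  have su: "Q(qmul hq (z,x,y,0)) \<in> SU2" "Q(cos \<nu>,\<sigma>*x,\<sigma>*y,0) \<in> SU2" "Q(0,0,0,1) \<in> SU2"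
    "Q(qmul (qmul hq (0,0,0,1)) (qconj hq)) \<in> SU2" "Q hq \<in> SU2" "Q(-1,0,0,0) \<in> SU2"
  proof -
    have z1: "nq (z,x,y,0) = 1" "nq (0,0,0,1) = 1" "nq (-1,0,0,0) = 1" using sp by (simp_all add: nq_def add.assoc add.commute add.left_commute)
    have nc: "nq (qconj hq) = 1" using nh by (simp add: nq_def qconj_def hq_def)
    show "Q(qmul hq (z,x,y,0)) \<in> SU2" by (rule Q_SU2) (simp add: nq_qmul nh z1 nB nc)
    show "Q(cos \<nu>,\<sigma>*x,\<sigma>*y,0) \<in> SU2" by (rule Q_SU2) (simp add: nq_qmul nh z1 nB nc)
    show "Q(0,0,0,1) \<in> SU2" by (rule Q_SU2) (simp add: nq_qmul nh z1 nB nc)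
    show "Q(qmul (qmul hq (0,0,0,1)) (qconj hq)) \<in> SU2" by (rule Q_SU2) (simp add: nq_qmul nh z1 nB nc)
    show "Q hq \<in> SU2" by (rule Q_SU2) (simp add: nq_qmul nh z1 nB nc)
    show "Q(-1,0,0,0) \<in> SU2" by (rule Q_SU2) (simp add: nq_qmul nh z1 nB nc)
  qed
  have tr: "trace (Q(0,0,0,1)) = 0" "trace (Q hq) = 0" by (simp_all add: trace_Q hq_def)
  have eq: "Q hq ** Q(-1,0,0,0) ** Q(0,0,0,1) ** Q(cos \<nu>,\<sigma>*x,\<sigma>*y,0) = Q(0,0,0,1) ** Q(cos \<nu>,\<sigma>*x,\<sigma>*y,0) ** Q hq"
    unfolding Q_mult Q_eq_iff by (simp add: qmul_def hq_def algebra_simps)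
  have bq: "Q(qmul (qmul hq (0,0,0,1)) (qconj hq)) = Q hq ** matrix_inv (Q(0,0,0,1)) ** matrix_inv (Q(-1,0,0,0)) ** matrix_inv (Q hq)"
    unfolding ih ia iw Q_mult Q_eq_iff by (simp add: qmul_def hq_def qconj_def algebra_simps)
  have hA: "matrix_inv (Q hq) ** Q(qmul hq (z,x,y,0)) = quat z x y 0"
    unfolding ih Q_mult qconj_mul_cancel[OF nh] by (simp add: Q_def)
  have cond: "Q(cos \<nu>,\<sigma>*x,\<sigma>*y,0) = quat (cos (e * sin \<phi>)) (sin (e * sin \<phi>) * r$1) (sin (e * sin \<phi>) * r$2) (sin (e * sin \<phi>) * r$3)"
    if r: "r \<in> sphere 0 1" and hr: "quat z x y 0 = quat (cos \<phi>) (sin \<phi> * r$1) (sin \<phi> * r$2) (sin \<phi> * r$3)" for \<phi> and r :: "real^3"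
  proof -
    have r1: "(r$1)\<^sup>2+(r$2)\<^sup>2+(r$3)\<^sup>2 = 1" using r sphere3 by blast
    have c: "z = cos \<phi>" "x = sin \<phi> * r$1" "y = sin \<phi> * r$2" "0 = sin \<phi> * r$3" using hr by (simp_all add: quat_eq_iff)
    have "z\<^sup>2 = (cos \<phi>)\<^sup>2" using c(1) by simp
    hence "(sin \<phi>)\<^sup>2 = s\<^sup>2" using sp s2 sin_cos_squared_add[of \<phi>] by linarith
    hence sc: "sin \<phi> = s \<or> sin \<phi> = - s" by (simp add: power2_eq_iff)
    show ?thesis
    proof (cases "s = 0")
      case True
      then have "sin \<phi> = 0" using sc by auto
      moreover have "x = 0" "y = 0" using True s2 by (auto simp: add_nonneg_eq_0_iff)
      ultimately show ?thesis using True by (simp add: Q_def \<nu>_def)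
    next
      case False
      have r3: "r$3 = 0" using c(4) sc False by auto
      have rx: "r$1 = sin \<phi> * x / s\<^sup>2" "r$2 = sin \<phi> * y / s\<^sup>2" using c sc False by (auto simp: power2_eq_square)
      have sx: "\<sigma> = sin \<nu> / s" using ss False by (simp add: field_simps)
      from sc show ?thesis
      proof
        assume "sin \<phi> = s" then show ?thesis using rx r3 sx False by (simp add: Q_def \<nu>_def quat_eq_iff power2_eq_square)
      next
        assume "sin \<phi> = - s" then show ?thesis using rx r3 sx False by (simp add: Q_def \<nu>_def quat_eq_iff power2_eq_square)
      qed
    qed
  qed
  show ?thesis unfolding PQ Rep_def
    using su tr eq bq hA cond w by (auto simp: Let_def)
qed


definition cq :: "real\<times>real\<times>real\<times>real \<Rightarrow> real\<times>real\<times>real\<times>real \<Rightarrow> real\<times>real\<times>real\<times>real" where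
  "cq g p = qmul (qmul g p) (qconj g)"

lemma qconj_qmul: "qconj (qmul p q) = qmul (qconj q) (qconj p)"
  by (cases p rule: prod_cases4; cases q rule: prod_cases4) (simp add: qmul_def qconj_def algebra_simps)

lemma qconj_qconj[simp]: "qconj (qconj p) = p"
  by (cases p rule: prod_cases4) (simp add: qconj_def)

lemma nq_qconj[simp]: "nq (qconj p) = nq p"
  by (cases p rule: prod_cases4) (simp add: qconj_def nq_def)

lemma qmul_real: "qmul (c,0,0,0) p = c *\<^sub>R p" "qmul p (c,0,0,0) = c *\<^sub>R p"
  by (cases p rule: prod_cases4; simp add: qmul_def)+

lemma qconj_real[simp]: "qconj (c,0,0,0) = (c,0,0,0)" by (simp add: qconj_def)

lemma qmul_scale: "qmul (c *\<^sub>R p) q = c *\<^sub>R qmul p q" "qmul p (c *\<^sub>R q) = c *\<^sub>R qmul p q"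
  by (cases p rule: prod_cases4; cases q rule: prod_cases4; simp add: qmul_def algebra_simps)+

lemma cq_mul: "nq g = 1 \<Longrightarrow> cq g (qmul p q) = qmul (cq g p) (cq g q)"
proof -
  assume g: "nq g = 1"
  have "qmul (cq g p) (cq g q) = qmul (qmul g p) (qmul (qmul (qconj g) g) (qmul q (qconj g)))"
    unfolding cq_def by (simp add: qmul_assoc)
  also have "\<dots> = qmul (qmul g p) (qmul q (qconj g))" using g by (simp add: qmul_conj_self qmul_one)
  finally show ?thesis unfolding cq_def by (simp add: qmul_assoc)
qed

lemma cq_comp: "cq g1 (cq g2 p) = cq (qmul g1 g2) p"
  unfolding cq_def by (simp add: qconj_qmul qmul_assoc)

lemma cq_inv: "nq g = 1 \<Longrightarrow> cq (qconj g) (cq g p) = p"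
  by (simp add: cq_comp) (simp add: cq_def qmul_conj_self qmul_one)

lemma cq_inv2: "nq g = 1 \<Longrightarrow> cq g (cq (qconj g) p) = p"
  by (simp add: cq_comp) (simp add: cq_def qmul_conj_self qmul_one)

lemma nq_cq: "nq g = 1 \<Longrightarrow> nq (cq g p) = nq p"
  by (simp add: cq_def nq_qmul)

lemma cq_qconj: "cq g (qconj p) = qconj (cq g p)"
  unfolding cq_def by (simp add: qconj_qmul qmul_assoc)

lemma cq_lin: "cq g (p + q) = cq g p + cq g q" "cq g (c *\<^sub>R p) = c *\<^sub>R cq g p" "cq g (p - q) = cq g p - cq g q"
   "cq g (- p) = - cq g p"
  by (cases g rule: prod_cases4; cases p rule: prod_cases4; cases q rule: prod_cases4; simp add: cq_def qmul_def qconj_def algebra_simps)+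

lemma cq_real: "nq g = 1 \<Longrightarrow> cq g (c,0,0,0) = (c,0,0,0)"
  by (simp add: cq_def qmul_real qmul_scale qmul_conj_self)

lemma fst_cq: "nq g = 1 \<Longrightarrow> fst (cq g p) = fst p"
proof -
  assume g: "nq g = 1"
  obtain c x y z where p: "p = (c,x,y,z)" by (cases p rule: prod_cases4)
  have "cq g p = cq g ((c,0,0,0) + (0,x,y,z))" using p by simp
  hence "cq g p = (c,0,0,0) + cq g (0,x,y,z)" using g by (simp only: cq_lin cq_real)
  moreover have "fst (cq g (0,x,y,z)) = 0"
    by (cases g rule: prod_cases4) (simp add: cq_def qmul_def qconj_def algebra_simps)
  ultimately show ?thesis using p by simp
qed

lemma Q_conj: "nq g = 1 \<Longrightarrow> Q g ** Q p ** matrix_inv (Q g) = Q (cq g p)"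
  by (simp add: matrix_inv_Q Q_mult cq_def)


definition RepQ :: "real \<Rightarrow> real\<times>real\<times>real\<times>real \<Rightarrow> real\<times>real\<times>real\<times>real \<Rightarrow> real\<times>real\<times>real\<times>real \<Rightarrow> real\<times>real\<times>real\<times>real \<Rightarrow> real\<times>real\<times>real\<times>real \<Rightarrow> real\<times>real\<times>real\<times>real \<Rightarrow> bool" where
 "RepQ e A B a b h w \<longleftrightarrow> nq A = 1 \<and> nq B = 1 \<and> nq a = 1 \<and> nq b = 1 \<and> nq h = 1 \<and> nq w = 1 \<and>
   fst a = 0 \<and> fst h = 0 \<and> w = (-1,0,0,0) \<and>
   qmul (qmul (qmul h w) a) B = qmul (qmul a B) h \<and>
   b = qmul (qmul (qmul h (qconj a)) (qconj w)) (qconj h) \<and>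
   (\<forall>\<phi> r1 r2 r3. r1\<^sup>2+r2\<^sup>2+r3\<^sup>2 = 1 \<and> qmul (qconj h) A = (cos \<phi>, sin \<phi> * r1, sin \<phi> * r2, sin \<phi> * r3) \<longrightarrow>
      B = (cos (e * sin \<phi>), sin (e * sin \<phi>) * r1, sin (e * sin \<phi>) * r2, sin (e * sin \<phi>) * r3))"

lemma Q_SU2_iff: "Q p \<in> SU2 \<longleftrightarrow> nq p = 1"
  using SU2_iff Q_eq_iff by metis

lemma quat_Q: "quat c x y z = Q (c,x,y,z)" by (simp add: Q_def)

lemma negI_Q: "- mat 1 = Q(-1,0,0,0)" by (simp add: mat1_Q neg_Q)
lemma inv_negI: "matrix_inv (Q(-1,0,0,0)) = Q(-1,0,0,0)" by (subst matrix_inv_Q) (simp_all add: nq_def qconj_def)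

lemma RepQ_Rep: assumes "RepQ e A B a b h w" shows "(Q A, Q B, Q a, Q b, Q h, Q w) \<in> Rep e"
proof -
  note R = assms[unfolded RepQ_def]
  have n: "nq a = 1" "nq h = 1" "nq w = 1" using assms unfolding RepQ_def by blast+
  have iv: "matrix_inv (Q a) = Q (qconj a)" "matrix_inv (Q h) = Q (qconj h)" "matrix_inv (Q w) = Q (qconj w)"
    using n by (simp_all add: matrix_inv_Q)
  have w: "Q w = - mat 1" using R by (simp add: mat1_Q neg_Q)
  have c: "Q B = quat (cos (e * sin \<phi>)) (sin (e * sin \<phi>) * r$1) (sin (e * sin \<phi>) * r$2) (sin (e * sin \<phi>) * r$3)"
    if "r \<in> sphere 0 1" "matrix_inv (Q h) ** Q A = quat (cos \<phi>) (sin \<phi> * r$1) (sin \<phi> * r$2) (sin \<phi> * r$3)"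
    for \<phi> and r :: "real^3"
  proof -
    have "(r$1)\<^sup>2+(r$2)\<^sup>2+(r$3)\<^sup>2 = 1" using that(1) sphere3 by blast
    moreover have "qmul (qconj h) A = (cos \<phi>, sin \<phi> * r$1, sin \<phi> * r$2, sin \<phi> * r$3)"
      using that(2) by (simp add: iv Q_mult quat_Q Q_eq_iff)
    ultimately show ?thesis using R by (simp add: quat_Q Q_eq_iff)
  qed
  show ?thesis unfolding Rep_def using R c w
    by (auto simp: Q_SU2_iff trace_Q iv Q_mult Let_def negI_Q inv_negI)
qed

lemma Rep_RepQ: assumes "x \<in> Rep e"
  shows "\<exists>A B a b h w. x = (Q A, Q B, Q a, Q b, Q h, Q w) \<and> RepQ e A B a b h w"
proof -
  obtain A' B' a' b' h' w' where x: "x = (A', B', a', b', h', w')" by (cases x) auto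
  note R = assms[unfolded x Rep_def mem_Collect_eq prod.case]
  have s: "A' \<in> SU2" "B' \<in> SU2" "a' \<in> SU2" "b' \<in> SU2" "h' \<in> SU2" "w' \<in> SU2" using R by blast+
  obtain A where A: "A' = Q A" "nq A = 1" using s(1) SU2_Q by blast
  obtain B where B: "B' = Q B" "nq B = 1" using s(2) SU2_Q by blast
  obtain a where a: "a' = Q a" "nq a = 1" using s(3) SU2_Q by blast
  obtain b where b: "b' = Q b" "nq b = 1" using s(4) SU2_Q by blast
  obtain h where h: "h' = Q h" "nq h = 1" using s(5) SU2_Q by blast
  obtain w where w: "w' = Q w" "nq w = 1" using s(6) SU2_Q by blast
  have q: "A' = Q A" "B' = Q B" "a' = Q a" "b' = Q b" "h' = Q h" "w' = Q w" using A B a b h w by simp_all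
  have n: "nq A = 1" "nq B = 1" "nq a = 1" "nq b = 1" "nq h = 1" "nq w = 1" using A B a b h w by simp_all
  note R2 = R[unfolded q negI_Q]
  have allR: "\<forall>\<phi> (r::real^3). r \<in> sphere 0 1 \<and> matrix_inv (Q h) ** Q A = quat (cos \<phi>) (sin \<phi> * r$1) (sin \<phi> * r$2) (sin \<phi> * r$3)
     \<longrightarrow> (let \<nu> = e * sin \<phi> in Q B = quat (cos \<nu>) (sin \<nu> * r$1) (sin \<nu> * r$2) (sin \<nu> * r$3))"
    using R2 by blast
  have iv: "matrix_inv (Q a) = Q (qconj a)" "matrix_inv (Q h) = Q (qconj h)" "matrix_inv (Q w) = Q (qconj w)"
    using n by (simp_all add: matrix_inv_Q)
  have w: "w = (-1,0,0,0)" using R2 by (simp add: mat1_Q neg_Q Q_eq_iff)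
  have tr: "fst a = 0" "fst h = 0" using R2 by (simp_all add: trace_Q)
  have eqs: "qmul (qmul (qmul h w) a) B = qmul (qmul a B) h"
     "b = qmul (qmul (qmul h (qconj a)) (qconj w)) (qconj h)"
    using R2 w by (simp_all add: iv Q_mult Q_eq_iff inv_negI)
  have all: "B = (cos (e * sin \<phi>), sin (e * sin \<phi>) * r1, sin (e * sin \<phi>) * r2, sin (e * sin \<phi>) * r3)"
    if "r1\<^sup>2+r2\<^sup>2+r3\<^sup>2 = 1" "qmul (qconj h) A = (cos \<phi>, sin \<phi> * r1, sin \<phi> * r2, sin \<phi> * r3)" for \<phi> r1 r2 r3
  proof -
    let ?r = "vector [r1,r2,r3] :: real^3"
    have "?r \<in> sphere 0 1" using that(1) sphere3 by simp
    moreover have "matrix_inv (Q h) ** Q A = quat (cos \<phi>) (sin \<phi> * ?r$1) (sin \<phi> * ?r$2) (sin \<phi> * ?r$3)"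
      using that(2) by (simp add: iv Q_mult quat_Q)
    ultimately have "Q B = quat (cos (e * sin \<phi>)) (sin (e * sin \<phi>) * ?r$1) (sin (e * sin \<phi>) * ?r$2) (sin (e * sin \<phi>) * ?r$3)"
      using allR[THEN spec[of _ \<phi>], THEN spec[of _ ?r]] by (simp add: Let_def)
    thus ?thesis by (simp add: quat_Q Q_eq_iff)
  qed
  show ?thesis unfolding x q RepQ_def using n w tr eqs all by blast
qed


lemma cq_split: "nq g = 1 \<Longrightarrow> cq g (c, s*x, s*y, s*z) = (c,0,0,0) + s *\<^sub>R cq g (0,x,y,z)"
proof -
  assume g: "nq g = 1"
  have "(c, s*x, s*y, s*z) = (c,0,0,0) + s *\<^sub>R (0,x,y,z)" by simp
  hence "cq g (c, s*x, s*y, s*z) = cq g ((c,0,0,0) + s *\<^sub>R (0,x,y,z))" by simp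
  also have "\<dots> = (c,0,0,0) + s *\<^sub>R cq g (0,x,y,z)" using g by (simp only: cq_lin cq_real)
  finally show ?thesis .
qed

lemma cq_imag: assumes "nq g = 1" "x\<^sup>2+y\<^sup>2+z\<^sup>2 = 1"
  shows "\<exists>x' y' z'. cq g (0,x,y,z) = (0,x',y',z') \<and> x'\<^sup>2+y'\<^sup>2+z'\<^sup>2 = 1"
proof -
  obtain c x' y' z' where e: "cq g (0,x,y,z) = (c,x',y',z')" by (cases "cq g (0,x,y,z)" rule: prod_cases4)
  have "c = 0" using fst_cq[OF assms(1), of "(0,x,y,z)"] e by simp
  moreover have "nq (c,x',y',z') = 1" using nq_cq[OF assms(1), of "(0,x,y,z)"] e assms(2) by (simp add: nq_def add.assoc)
  ultimately show ?thesis using e by (auto simp: nq_def add.assoc)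
qed

lemma RepQ_cq: assumes g: "nq g = 1" and R: "RepQ e A B a b h w"
  shows "RepQ e (cq g A) (cq g B) (cq g a) (cq g b) (cq g h) (cq g w)"
proof -
  note R' = R[unfolded RepQ_def]
  have w: "w = (-1,0,0,0)" using R' by blast
  have allR: "\<And>\<phi> r1 r2 r3. r1\<^sup>2+r2\<^sup>2+r3\<^sup>2 = 1 \<Longrightarrow> qmul (qconj h) A = (cos \<phi>, sin \<phi> * r1, sin \<phi> * r2, sin \<phi> * r3) \<Longrightarrow>
      B = (cos (e * sin \<phi>), sin (e * sin \<phi>) * r1, sin (e * sin \<phi>) * r2, sin (e * sin \<phi>) * r3)"
    using R' by blast
  have nn: "nq (cq g A) = 1" "nq (cq g B) = 1" "nq (cq g a) = 1" "nq (cq g b) = 1" "nq (cq g h) = 1" "nq (cq g w) = 1"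
  proof -
    have n0: "nq A = 1" "nq B = 1" "nq a = 1" "nq b = 1" "nq h = 1" "nq w = 1" using R' by blast+
    show "nq (cq g A) = 1" "nq (cq g B) = 1" "nq (cq g a) = 1" "nq (cq g b) = 1" "nq (cq g h) = 1" "nq (cq g w) = 1"
      by (simp_all only: nq_cq[OF g] n0)
  qed
  have f0: "fst a = 0" "fst h = 0" using R' by blast+
  have ff: "fst (cq g a) = 0" "fst (cq g h) = 0" by (simp_all only: fst_cq[OF g] f0)
  have e0: "qmul (qmul (qmul h w) a) B = qmul (qmul a B) h" "b = qmul (qmul (qmul h (qconj a)) (qconj w)) (qconj h)"
    using R' by blast+
  have ww: "cq g w = (-1,0,0,0)" using w g by (simp add: cq_real)
  have eq1: "qmul (qmul (qmul (cq g h) (cq g w)) (cq g a)) (cq g B) = qmul (qmul (cq g a) (cq g B)) (cq g h)"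
    using e0 g by (simp only: cq_mul[OF g, symmetric])
  have eq2: "cq g b = qmul (qmul (qmul (cq g h) (qconj (cq g a))) (qconj (cq g w))) (qconj (cq g h))"
    using e0 g by (simp only: cq_mul[OF g, symmetric] cq_qconj[symmetric])
  have all: "cq g B = (cos (e * sin \<phi>), sin (e * sin \<phi>) * r1, sin (e * sin \<phi>) * r2, sin (e * sin \<phi>) * r3)"
    if r: "r1\<^sup>2+r2\<^sup>2+r3\<^sup>2 = 1" and hA: "qmul (qconj (cq g h)) (cq g A) = (cos \<phi>, sin \<phi> * r1, sin \<phi> * r2, sin \<phi> * r3)"
    for \<phi> r1 r2 r3
  proof -
    have g': "nq (qconj g) = 1" using g by simp
    obtain x y z where xyz: "cq (qconj g) (0,r1,r2,r3) = (0,x,y,z)" "x\<^sup>2+y\<^sup>2+z\<^sup>2 = 1"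
      using cq_imag[OF g' r] by blast
    have "cq g (qmul (qconj h) A) = (cos \<phi>, sin \<phi> * r1, sin \<phi> * r2, sin \<phi> * r3)"
      using hA g by (simp add: cq_mul cq_qconj)
    hence "qmul (qconj h) A = cq (qconj g) (cos \<phi>, sin \<phi> * r1, sin \<phi> * r2, sin \<phi> * r3)"
      using cq_inv[OF g] by metis
    also have "\<dots> = (cos \<phi>, sin \<phi> * x, sin \<phi> * y, sin \<phi> * z)"
      using cq_split[OF g'] xyz by simp
    finally have "B = (cos (e * sin \<phi>), sin (e * sin \<phi>) * x, sin (e * sin \<phi>) * y, sin (e * sin \<phi>) * z)"
      using allR xyz by blast
    hence "cq g B = (cos (e * sin \<phi>),0,0,0) + sin (e * sin \<phi>) *\<^sub>R cq g (0,x,y,z)"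
      using cq_split[OF g] by simp
    also have "cq g (0,x,y,z) = (0,r1,r2,r3)" using xyz(1) cq_inv2[OF g] by metis
    finally show ?thesis by simp
  qed
  show ?thesis unfolding RepQ_def using nn ff ww eq1 eq2 all by blast
qed


definition qv :: "cmat \<Rightarrow> real\<times>real\<times>real\<times>real" where
  "qv U = (Re (U$1$1), Im (U$1$2), Re (U$1$2), Im (U$1$1))"

lemma qv_Q[simp]: "qv (Q p) = p"
  by (cases p rule: prod_cases4) (simp add: qv_def Q_def)

definition im :: "real\<times>real\<times>real\<times>real \<Rightarrow> real\<times>real\<times>real\<times>real" where "im p = (0, snd p)"

definition vec3 :: "real \<Rightarrow> real \<Rightarrow> real \<Rightarrow> real^3" where
  "vec3 x y z = (\<chi> i. if i = 1 then x else if i = 2 then y else z)"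

lemma vec3_nth[simp]: "vec3 x y z $ 1 = x" "vec3 x y z $ 2 = y" "vec3 x y z $ 3 = z"
  by (simp_all add: vec3_def)

lemma vec3_eta: "vec3 (p$1) (p$2) (p$3) = p"
  by (simp add: vec_eq_iff forall_3)

definition Gq :: "real\<times>real\<times>real\<times>real \<Rightarrow> real\<times>real\<times>real\<times>real \<Rightarrow> real\<times>real\<times>real\<times>real \<Rightarrow> real^3" where
  "Gq A h a = (let M = qmul (qconj h) A; m = im M; d = - fst (qmul h a); u = h - d *\<^sub>R a;
      n = sqrt (- fst (qmul u u)); e1 = (1/n) *\<^sub>R u; e2 = - im (qmul a e1)
      in vec3 (- fst (qmul m e1)) (- fst (qmul m e2)) (fst M))"

definition Gm :: "tup \<Rightarrow> real^3" where
  "Gm x = (case x of (A,B,a,b,h,w) \<Rightarrow> Gq (qv A) (qv h) (qv a))"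

lemma cq_im: "nq g = 1 \<Longrightarrow> cq g (im p) = im (cq g p)"
proof -
  assume g: "nq g = 1"
  have i: "im p = p - (fst p,0,0,0)" for p by (cases p rule: prod_cases4) (simp add: im_def)
  show ?thesis unfolding i using g by (simp add: cq_lin cq_real fst_cq)
qed

lemma Gq_cq: assumes g: "nq g = 1" shows "Gq (cq g A) (cq g h) (cq g a) = Gq A h a"
proof -
  have f: "fst (qmul (cq g p) (cq g q)) = fst (qmul p q)" for p q
    using g by (simp add: cq_mul[symmetric] fst_cq)
  have c1: "qmul (qconj (cq g h)) (cq g A) = cq g (qmul (qconj h) A)" using g by (simp add: cq_mul cq_qconj)
  have c2: "cq g h - d *\<^sub>R cq g a = cq g (h - d *\<^sub>R a)" for d by (simp add: cq_lin)
  have c3: "(1/n) *\<^sub>R cq g u = cq g ((1/n) *\<^sub>R u)" for n u by (simp add: cq_lin)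
  have c4: "- im (qmul (cq g a) (cq g e)) = cq g (- im (qmul a e))" for e using g by (simp add: cq_lin cq_im cq_mul)
  show ?thesis unfolding Gq_def Let_def c1 f c2 c3 c4 cq_im[OF g, symmetric] fst_cq[OF g] ..
qed

lemma Gq_normal: assumes "\<alpha> > 0" "M = qmul (qconj (0,\<alpha>,0,\<beta>)) A"
  shows "Gq A (0,\<alpha>,0,\<beta>) (0,0,0,1) = vec3 (fst (snd M)) (fst (snd (snd M))) (fst M)"
proof -
  obtain m0 m1 m2 m3 where m: "M = (m0,m1,m2,m3)" by (cases M rule: prod_cases4)
  have u: "(0,\<alpha>,0,\<beta>) - (- fst (qmul (0,\<alpha>,0,\<beta>) (0,0,0,1))) *\<^sub>R (0,0,0,1) = (0,\<alpha>,0,(0::real))"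
    by (simp add: qmul_def zero_prod_def)
  have n: "sqrt (- fst (qmul (0,\<alpha>,0,0) (0,\<alpha>,0,0))) = \<alpha>" using assms(1) by (simp add: qmul_def)
  show ?thesis unfolding Gq_def Let_def assms(2)[symmetric] u n using assms(1) m
    by (simp add: qmul_def im_def)
qed


lemma Gm_Pm: assumes "0 < e" "e < 1/2" "p \<in> sphere 0 1" shows "Gm (Pm e p) = p"
proof -
  obtain \<alpha> \<beta> B' b' where h: "\<alpha> > 0" "nq (0,\<alpha>,0,\<beta>) = 1"
    "Pm e p = (Q(qmul (0,\<alpha>,0,\<beta>) (p$3,p$1,p$2,0)), Q B', Q(0,0,0,1), Q b', Q (0,\<alpha>,0,\<beta>), Q(-1,0,0,0))"
    using Pm_Q[OF assms] by blast
  have M: "qmul (qconj (0,\<alpha>,0,\<beta>)) (qmul (0,\<alpha>,0,\<beta>) (p$3,p$1,p$2,0)) = (p$3,p$1,p$2,0)"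
    using qconj_mul_cancel[OF h(2)] .
  show ?thesis unfolding h(3) Gm_def by (simp add: Gq_normal[OF h(1) M[symmetric]] vec3_eta)
qed

lemma sg_pos: fixes e s :: real assumes "0 < e" "e < 1/2" "0 \<le> s" "s \<le> 1" shows "sg e s > 0"
proof (cases "s = 0")
  case True thus ?thesis using assms by (simp add: sg_def)
next
  case False
  have "e * s \<le> e" using assms mult_le_cancel_left_pos[of e s 1] by simp
  moreover have "0 < e * s" using assms False by simp
  ultimately have "sin (e * s) > 0" using assms pi_gt3 by (intro sin_gt_zero) linarith+
  thus ?thesis using False assms by (simp add: sg_def)
qed

lemma cos_pos_small: fixes e s :: real assumes "0 < e" "e < 1/2" "0 \<le> s" "s \<le> 1" shows "cos (e * s) > 0"
proof -
  have "e * s \<le> e" using assms mult_le_cancel_left_pos[of e s 1] by simp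
  moreover have "0 \<le> e * s" using assms by simp
  ultimately show ?thesis using assms pi_gt3 by (intro cos_gt_zero_pi) linarith+
qed

lemma k_eq:
  assumes "qmul (qmul (qmul (0,h1,h2,h3) (-1,0,0,0)) (0,0,0,1)) (b0,b1,b2,b3) = qmul (qmul (0,0,0,1) (b0,b1,b2,b3)) (0,h1,h2,h3)"
  shows "h3*b0 - h2*b1 + h1*b2 = 0" "h1*b3 = 0" "h2*b3 = 0" "h3*b3 = 0"
  using assms by (auto simp: qmul_def algebra_simps)

lemma RepQ_k:
  assumes e: "0 < e" "e < 1/2" and R: "RepQ e A B (0,0,0,1) b (0,h1,h2,h3) w"
    and M: "qmul (qconj (0,h1,h2,h3)) A = (c,v1,v2,v3)"
  shows "v3 = 0 \<and> c\<^sup>2+v1\<^sup>2+v2\<^sup>2 = 1 \<and>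
    B = (cos (e * sqrt(v1\<^sup>2+v2\<^sup>2)), sg e (sqrt(v1\<^sup>2+v2\<^sup>2)) * v1, sg e (sqrt(v1\<^sup>2+v2\<^sup>2)) * v2, 0) \<and>
    h3 * cos (e * sqrt(v1\<^sup>2+v2\<^sup>2)) = sg e (sqrt(v1\<^sup>2+v2\<^sup>2)) * (h2 * v1 - h1 * v2) \<and> h1\<^sup>2 + h2\<^sup>2 > 0"
proof -
  note R' = R[unfolded RepQ_def]
  have nA: "nq A = 1" and nh: "nq (0,h1,h2,h3) = 1" and w: "w = (-1,0,0,0)" using R' by blast+
  have eq: "qmul (qmul (qmul (0,h1,h2,h3) w) (0,0,0,1)) B = qmul (qmul (0,0,0,1) B) (0,h1,h2,h3)" using R' by blast
  have allR: "\<And>\<phi> r1 r2 r3. r1\<^sup>2+r2\<^sup>2+r3\<^sup>2 = 1 \<Longrightarrow> qmul (qconj (0,h1,h2,h3)) A = (cos \<phi>, sin \<phi> * r1, sin \<phi> * r2, sin \<phi> * r3) \<Longrightarrow>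
      B = (cos (e * sin \<phi>), sin (e * sin \<phi>) * r1, sin (e * sin \<phi>) * r2, sin (e * sin \<phi>) * r3)"
    using R' by blast
  have "nq (qmul (qconj (0,h1,h2,h3)) A) = 1" by (simp only: nq_qmul nq_qconj nA nh mult_1)
  hence nM: "c\<^sup>2+v1\<^sup>2+v2\<^sup>2+v3\<^sup>2 = 1" unfolding M by (simp add: nq_def add.assoc)
  have h1: "h1\<^sup>2+h2\<^sup>2+h3\<^sup>2 = 1" using nh by (simp add: nq_def add.assoc)
  define s0 where "s0 = sqrt(v1\<^sup>2+v2\<^sup>2+v3\<^sup>2)"
  have s00: "s0 \<ge> 0" unfolding s0_def by simp
  have s0sq: "s0\<^sup>2 = v1\<^sup>2+v2\<^sup>2+v3\<^sup>2" unfolding s0_def by simp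
  have "c\<^sup>2 \<le> 1" using nM zero_le_power2[of v1] zero_le_power2[of v2] zero_le_power2[of v3] by linarith
  hence c1: "\<bar>c\<bar> \<le> 1" by (simp add: abs_square_le_1)
  have "v1\<^sup>2+v2\<^sup>2+v3\<^sup>2 = 1 - c\<^sup>2" using nM by linarith
  hence s0c: "s0 = sqrt (1 - c\<^sup>2)" unfolding s0_def by simp
  have s01: "s0 \<le> 1" unfolding s0c using c1 by simp
  define \<phi> where "\<phi> = arccos c"
  have cphi: "cos \<phi> = c" unfolding \<phi>_def using c1 by simp
  have sphi: "sin \<phi> = s0" unfolding \<phi>_def s0c using c1 by (simp add: sin_arccos)
  define \<sigma>0 where "\<sigma>0 = sg e s0"
  have Bf: "B = (cos (e * s0), \<sigma>0 * v1, \<sigma>0 * v2, \<sigma>0 * v3)"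
  proof (cases "s0 = 0")
    case True
    hence v: "v1 = 0" "v2 = 0" "v3 = 0" using s0sq by (auto simp: add_nonneg_eq_0_iff)
    have "B = (cos (e * sin \<phi>), sin (e * sin \<phi>) * 1, sin (e * sin \<phi>) * 0, sin (e * sin \<phi>) * 0)"
      by (rule allR) (simp_all add: M cphi sphi True v)
    thus ?thesis using True v sphi by simp
  next
    case False
    have "B = (cos (e * sin \<phi>), sin (e * sin \<phi>) * (v1/s0), sin (e * sin \<phi>) * (v2/s0), sin (e * sin \<phi>) * (v3/s0))"
    proof (rule allR)
      have "(v1/s0)\<^sup>2+(v2/s0)\<^sup>2+(v3/s0)\<^sup>2 = (v1\<^sup>2+v2\<^sup>2+v3\<^sup>2)/s0\<^sup>2" by (simp add: power_divide add_divide_distrib)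
      moreover have "s0\<^sup>2 \<noteq> 0" using False by simp
      ultimately show "(v1/s0)\<^sup>2+(v2/s0)\<^sup>2+(v3/s0)\<^sup>2 = 1" using s0sq by simp
      show "qmul (qconj (0,h1,h2,h3)) A = (cos \<phi>, sin \<phi> * (v1/s0), sin \<phi> * (v2/s0), sin \<phi> * (v3/s0))"
        using M False by (simp add: cphi sphi)
    qed
    thus ?thesis using False sphi by (simp add: \<sigma>0_def sg_def)
  qed
  have sgp: "\<sigma>0 > 0" unfolding \<sigma>0_def using e s00 s01 by (rule sg_pos)
  have cp: "cos (e * s0) > 0" using e s00 s01 by (rule cos_pos_small)
  define b0 where "b0 = cos (e * s0)"
  have eqs: "h3 * b0 - h2 * (\<sigma>0 * v1) + h1 * (\<sigma>0 * v2) = 0" "h1 * (\<sigma>0 * v3) = 0" "h2 * (\<sigma>0 * v3) = 0" "h3 * (\<sigma>0 * v3) = 0"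
    using k_eq[OF eq[unfolded w Bf b0_def[symmetric]]] by simp_all
  have "\<sigma>0 * v3 = 0"
  proof -
    have "(h1\<^sup>2+h2\<^sup>2+h3\<^sup>2) * (\<sigma>0 * v3) = h1*(h1 * (\<sigma>0 * v3)) + h2*(h2 * (\<sigma>0 * v3)) + h3*(h3 * (\<sigma>0 * v3))"
      by (simp add: power2_eq_square algebra_simps)
    also have "\<dots> = 0" by (simp only: eqs(2-4) mult_zero_right add_0)
    finally have "(h1\<^sup>2+h2\<^sup>2+h3\<^sup>2) * (\<sigma>0 * v3) = 0" .
    thus ?thesis using h1 by simp
  qed
  hence v3: "v3 = 0" using sgp by simp
  have s0e: "s0 = sqrt(v1\<^sup>2+v2\<^sup>2)" unfolding s0_def v3 by simp
  have rel: "h3 * cos (e * sqrt(v1\<^sup>2+v2\<^sup>2)) = sg e (sqrt(v1\<^sup>2+v2\<^sup>2)) * (h2 * v1 - h1 * v2)"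
    using eqs(1) unfolding b0_def s0e[symmetric] \<sigma>0_def[symmetric] by (simp add: algebra_simps)
  have hp: "h1\<^sup>2 + h2\<^sup>2 > 0"
  proof (rule ccontr)
    assume "\<not> h1\<^sup>2 + h2\<^sup>2 > 0"
    hence "h1\<^sup>2 + h2\<^sup>2 = 0" using zero_le_power2[of h1] zero_le_power2[of h2] by linarith
    hence "h1 = 0" "h2 = 0" by (simp_all add: add_nonneg_eq_0_iff)
    hence "h3 \<noteq> 0" using h1 by auto
    moreover have "h3 * b0 = 0" using eqs(1) \<open>h1 = 0\<close> \<open>h2 = 0\<close> by simp
    ultimately show False using cp b0_def by simp
  qed
  show ?thesis using v3 nM Bf rel hp s0e unfolding \<sigma>0_def by simp
qed


lemma qmul_cancel_left: "nq h = 1 \<Longrightarrow> qmul h (qmul (qconj h) A) = A"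
  by (simp add: qmul_assoc[symmetric] qmul_conj_self qmul_one)

lemma normal_form:
  assumes e: "0 < e" "e < 1/2" and R: "RepQ e A B (0,0,0,1) b (0,\<alpha>,0,\<beta>) w" and ap: "\<alpha> > 0"
  defines "x \<equiv> (Q A, Q B, Q(0,0,0,1), Q b, Q(0,\<alpha>,0,\<beta>), Q w)"
  shows "Gm x \<in> sphere 0 1 \<and> Pm e (Gm x) = x"
proof -
  note R' = R[unfolded RepQ_def]
  have nh: "nq (0,\<alpha>,0,\<beta>) = 1" and w: "w = (-1,0,0,0)"
    and bq: "b = qmul (qmul (qmul (0,\<alpha>,0,\<beta>) (qconj (0,0,0,1))) (qconj w)) (qconj (0,\<alpha>,0,\<beta>))"
    using R' by blast+
  obtain c v1 v2 v3 where M: "qmul (qconj (0,\<alpha>,0,\<beta>)) A = (c,v1,v2,v3)"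
    by (cases "qmul (qconj (0,\<alpha>,0,\<beta>)) A" rule: prod_cases4)
  define s where "s = sqrt(v1\<^sup>2+v2\<^sup>2)"
  define \<sigma> where "\<sigma> = sg e s"
  define \<nu> where "\<nu> = e * s"
  have k: "v3 = 0" "c\<^sup>2+v1\<^sup>2+v2\<^sup>2 = 1" "B = (cos \<nu>, \<sigma> * v1, \<sigma> * v2, 0)"
     "\<beta> * cos \<nu> = \<sigma> * (0 * v1 - \<alpha> * v2)"
    using RepQ_k[OF e R M] unfolding s_def[symmetric] \<sigma>_def[symmetric] \<nu>_def[symmetric] by blast+
  have Gx: "Gm x = vec3 v1 v2 c"
    unfolding x_def Gm_def by (simp add: Gq_normal[OF ap M[symmetric]])
  have sph: "Gm x \<in> sphere 0 1" unfolding Gx sphere3 using k(2) by simp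
  have s0: "s \<ge> 0" unfolding s_def by simp
  have "v1\<^sup>2+v2\<^sup>2 \<le> 1" using k(2) zero_le_power2[of c] by linarith
  hence s1: "s \<le> 1" unfolding s_def by simp
  have cp: "cos \<nu> > 0" unfolding \<nu>_def using e s0 s1 by (rule cos_pos_small)
  define t where "t = \<sigma> * v2"
  define N where "N = sqrt((cos \<nu>)\<^sup>2+t\<^sup>2)"
  have Npos: "N > 0" unfolding N_def using cp by (simp add: add_pos_nonneg)
  have N2: "N\<^sup>2 = (cos \<nu>)\<^sup>2+t\<^sup>2" unfolding N_def by simp
  have ab: "\<alpha>\<^sup>2+\<beta>\<^sup>2 = 1" using nh by (simp add: nq_def)
  have rel: "\<beta> * cos \<nu> = - (t * \<alpha>)" using k(4) by (simp add: t_def)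
  have "(N*\<alpha>)\<^sup>2 = (cos \<nu>)\<^sup>2 * \<alpha>\<^sup>2 + (t*\<alpha>)\<^sup>2" using N2 by (simp add: power_mult_distrib algebra_simps)
  also have "(t*\<alpha>)\<^sup>2 = (\<beta> * cos \<nu>)\<^sup>2" using rel by simp
  also have "(cos \<nu>)\<^sup>2 * \<alpha>\<^sup>2 + (\<beta> * cos \<nu>)\<^sup>2 = (cos \<nu>)\<^sup>2 * (\<alpha>\<^sup>2+\<beta>\<^sup>2)" by (simp add: power_mult_distrib algebra_simps)
  finally have "(N*\<alpha>)\<^sup>2 = (cos \<nu>)\<^sup>2" using ab by simp
  hence Na: "N*\<alpha> = cos \<nu>" using Npos ap cp by (simp add: power2_eq_iff_nonneg)
  have al: "\<alpha> = cos \<nu> / N" using Na Npos by (simp add: field_simps)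
  have be: "\<beta> = - t / N"
  proof -
    have "\<beta> * cos \<nu> = - t * \<alpha>" using rel by simp
    hence "\<beta> * (N * \<alpha>) = - t * \<alpha>" using Na by simp
    hence "\<alpha> * (\<beta> * N + t) = 0" by (simp add: algebra_simps)
    hence "\<beta> * N = - t" using ap by simp
    thus ?thesis using Npos by (simp add: field_simps)
  qed
  have hq: "(0, cos \<nu>/N, 0, -t/N) = (0,\<alpha>,0,\<beta>)" using al be by simp
  have Pm: "Pm e (Gm x) = pg \<nu> t c v1 v2 (\<sigma> * v1) (\<sigma> * v2)"
    unfolding Gx Pm_def Let_def vec3_nth s_def[symmetric] \<sigma>_def[symmetric] \<nu>_def[symmetric] t_def ..
  have A: "qmul (0,\<alpha>,0,\<beta>) (c,v1,v2,0) = A" using qmul_cancel_left[OF nh, of A] M k(1) by simp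
  have b: "qmul (qmul (0,\<alpha>,0,\<beta>) (0,0,0,1)) (qconj (0,\<alpha>,0,\<beta>)) = b"
    unfolding bq w by (simp add: qmul_def qconj_def)
  have "Pm e (Gm x) = (Q (qmul (0,\<alpha>,0,\<beta>) (c,v1,v2,0)), Q(cos \<nu>, \<sigma> * v1, \<sigma> * v2,0), Q(0,0,0,1),
      Q (qmul (qmul (0,\<alpha>,0,\<beta>) (0,0,0,1)) (qconj (0,\<alpha>,0,\<beta>))), Q(0,\<alpha>,0,\<beta>), Q(-1,0,0,0))"
    unfolding Pm pg_Q[OF cp] N_def[symmetric] hq ..
  thus ?thesis using sph unfolding A b x_def k(3) w by simp
qed


lemma cq_scale: "cq (c *\<^sub>R g) p = c\<^sup>2 *\<^sub>R cq g p"
  by (cases g rule: prod_cases4; cases p rule: prod_cases4) (simp add: cq_def qmul_def qconj_def algebra_simps power2_eq_square)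

lemma nq_scale: "nq (c *\<^sub>R g) = c\<^sup>2 * nq g"
  by (cases g rule: prod_cases4) (simp add: nq_def algebra_simps power2_eq_square)

lemma intertwine:
  assumes "nq q > 0" "qmul q f = qmul e q"
  shows "\<exists>g. nq g = 1 \<and> cq g f = e"
proof -
  define g where "g = (1 / sqrt (nq q)) *\<^sub>R q"
  have "nq g = 1" unfolding g_def nq_scale using assms(1) by (simp add: power_divide)
  moreover have "cq q f = nq q *\<^sub>R e"
    unfolding cq_def assms(2) by (simp add: qmul_assoc qmul_conj_self qmul_real)
  hence "cq g f = e" unfolding g_def cq_scale using assms(1) by (simp add: power_divide)
  ultimately show ?thesis by blast
qed

lemma step1: assumes "nq a = 1" "fst a = 0" shows "\<exists>g. nq g = 1 \<and> cq g a = (0,0,0,1)"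
proof -
  obtain a1 a2 a3 where a: "a = (0,a1,a2,a3)" using assms(2) by (cases a rule: prod_cases4) auto
  have u: "a1\<^sup>2+a2\<^sup>2+a3\<^sup>2 = 1" using assms(1) a by (simp add: nq_def add.assoc)
  show ?thesis
  proof (cases "a3 = -1")
    case True
    hence "a1\<^sup>2+a2\<^sup>2 = 0" using u by simp
    hence "a1 = 0" "a2 = 0" by (simp_all add: add_nonneg_eq_0_iff)
    hence "cq (0,1,0,0) a = (0,0,0,1)" using a True by (simp add: cq_def qmul_def qconj_def)
    moreover have "nq (0,1,0,0) = 1" by (simp add: nq_def)
    ultimately show ?thesis by blast
  next
    case False
    have "a3\<^sup>2 \<le> 1" using u zero_le_power2[of a1] zero_le_power2[of a2] by linarith
    hence "a3 \<ge> -1" by (simp add: abs_square_le_1 abs_le_iff)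
    hence a3: "1 + a3 > 0" using False by simp
    have n: "nq (1+a3, -a2, a1, 0) > 0" using a3 by (simp add: nq_def add_pos_nonneg)
    have "qmul (1+a3, -a2, a1, 0) a = qmul (0,0,0,1) (1+a3, -a2, a1, 0)"
    proof -
      have "a1*a1 + a2*a2 + a3*a3 = 1" using u by (simp add: power2_eq_square)
      thus ?thesis using a by (simp add: qmul_def algebra_simps)
    qed
    thus ?thesis using intertwine[OF n] by blast
  qed
qed

lemma step2: assumes "h1\<^sup>2+h2\<^sup>2 > 0"
  shows "\<exists>g \<alpha> \<beta>. nq g = 1 \<and> cq g (0,0,0,1) = (0,0,0,1) \<and> cq g (0,h1,h2,h3) = (0,\<alpha>,0,\<beta>) \<and> \<alpha> > 0"
proof (cases "h2 = 0 \<and> h1 < 0")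
  case True
  have "cq (0,0,0,1) (0,0,0,1) = (0,0,0,1)" "cq (0,0,0,1) (0,h1,h2,h3) = (0,-h1,0,h3)" "nq (0,0,0,1) = 1"
    using True by (simp_all add: cq_def qmul_def qconj_def nq_def)
  moreover have "-h1 > 0" using True by simp
  ultimately show ?thesis by blast
next
  case False
  define \<rho> where "\<rho> = sqrt(h1\<^sup>2+h2\<^sup>2)"
  have rp: "\<rho> > 0" unfolding \<rho>_def using assms by simp
  have r2: "\<rho>*\<rho> = h1*h1+h2*h2" unfolding \<rho>_def using assms by (simp add: power2_eq_square[symmetric])
  have n: "nq (\<rho>+h1,0,0,h2) > 0"
  proof (cases "h2 = 0")
    case True
    hence "h1 > 0" using False assms by (cases "h1 = 0") auto
    hence "\<rho> + h1 > 0" using rp by simp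
    thus ?thesis by (simp add: nq_def add_pos_nonneg)
  next
    case f: False thus ?thesis by (simp add: nq_def add_nonneg_pos)
  qed
  define q where "q = (\<rho>+h1,0::real,0::real,h2)"
  have nq1: "nq q > 0" using n q_def by simp
  have i1: "qmul q (0,h1,h2,h3) = qmul (0,\<rho>,0,h3) q" unfolding q_def using r2 by (simp add: qmul_def algebra_simps)
  have i2: "qmul q (0,0,0,1) = qmul (0,0,0,1) q" unfolding q_def by (simp add: qmul_def)
  define g where "g = (1 / sqrt (nq q)) *\<^sub>R q"
  have ng: "nq g = 1" unfolding g_def nq_scale using nq1 by (simp add: power_divide)
  have c1: "cq q (0,h1,h2,h3) = nq q *\<^sub>R (0,\<rho>,0,h3)"
    unfolding cq_def i1 by (simp add: qmul_assoc qmul_conj_self qmul_real)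
  have c2: "cq q (0,0,0,1) = nq q *\<^sub>R (0,0,0,1)"
    unfolding cq_def i2 by (simp add: qmul_assoc qmul_conj_self qmul_real)
  have "cq g (0,h1,h2,h3) = (0,\<rho>,0,h3)" "cq g (0,0,0,1) = (0,0,0,1)"
    unfolding g_def cq_scale c1 c2 using nq1 by (simp_all add: power_divide)
  thus ?thesis using ng rp by blast
qed


lemma conj_tup_Q: "nq g = 1 \<Longrightarrow> conj_tup (Q g) (Q A, Q B, Q a, Q b, Q h, Q w) =
   (Q (cq g A), Q (cq g B), Q (cq g a), Q (cq g b), Q (cq g h), Q (cq g w))"
  by (simp add: conj_tup_def Q_conj)

lemma reduce:
  assumes e: "0 < e" "e < 1/2" and x: "x \<in> Rep e"
  shows "Gm x \<in> sphere 0 1 \<and> (\<exists>g\<in>SU2. Pm e (Gm x) = conj_tup g x)"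
proof -
  obtain A B a b h w where xq: "x = (Q A, Q B, Q a, Q b, Q h, Q w)" and R: "RepQ e A B a b h w"
    using Rep_RepQ[OF x] by blast
  have na: "nq a = 1" "fst a = 0" using R unfolding RepQ_def by blast+
  obtain g1 where g1: "nq g1 = 1" "cq g1 a = (0,0,0,1)" using step1[OF na] by blast
  have R1: "RepQ e (cq g1 A) (cq g1 B) (0,0,0,1) (cq g1 b) (cq g1 h) (cq g1 w)"
    using RepQ_cq[OF g1(1) R] g1(2) by simp
  have "fst (cq g1 h) = 0" using R1 unfolding RepQ_def by blast
  then obtain h1 h2 h3 where h: "cq g1 h = (0,h1,h2,h3)" by (cases "cq g1 h" rule: prod_cases4) auto
  obtain c v1 v2 v3 where M: "qmul (qconj (0,h1,h2,h3)) (cq g1 A) = (c,v1,v2,v3)"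
    by (cases "qmul (qconj (0,h1,h2,h3)) (cq g1 A)" rule: prod_cases4)
  have hp: "h1\<^sup>2+h2\<^sup>2 > 0" using RepQ_k[OF e R1[unfolded h] M] by blast
  obtain g2 \<alpha> \<beta> where g2: "nq g2 = 1" "cq g2 (0,0,0,1) = (0,0,0,1)" "cq g2 (0,h1,h2,h3) = (0,\<alpha>,0,\<beta>)" "\<alpha> > 0"
    using step2[OF hp] by blast
  define g where "g = qmul g2 g1"
  have ng: "nq g = 1" unfolding g_def using g1 g2 by (simp add: nq_qmul)
  have cg: "cq g p = cq g2 (cq g1 p)" for p unfolding g_def by (simp add: cq_comp)
  have R2: "RepQ e (cq g A) (cq g B) (0,0,0,1) (cq g b) (0,\<alpha>,0,\<beta>) (cq g w)"
    using RepQ_cq[OF g2(1) R1] g2 h unfolding cg by simp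
  define y where "y = (Q (cq g A), Q (cq g B), Q (0,0,0,1), Q (cq g b), Q (0,\<alpha>,0,\<beta>), Q (cq g w))"
  have nf: "Gm y \<in> sphere 0 1 \<and> Pm e (Gm y) = y" unfolding y_def by (rule normal_form[OF e R2 g2(4)])
  have yc: "y = conj_tup (Q g) x" unfolding xq conj_tup_Q[OF ng] y_def using cg g1 g2 h by simp
  have "Gm y = Gm x" unfolding yc xq conj_tup_Q[OF ng] Gm_def by (simp add: Gq_cq[OF ng])
  moreover have "Q g \<in> SU2" using ng by (rule Q_SU2)
  ultimately show ?thesis using nf yc by metis
qed


lemma qmul_alt: "qmul p q = (fst p * fst q - fst (snd p) * fst (snd q) - fst (snd (snd p)) * fst (snd (snd q)) - snd (snd (snd p)) * snd (snd (snd q)),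
  fst p * fst (snd q) + fst q * fst (snd p) - (fst (snd (snd p)) * snd (snd (snd q)) - snd (snd (snd p)) * fst (snd (snd q))),
  fst p * fst (snd (snd q)) + fst q * fst (snd (snd p)) - (snd (snd (snd p)) * fst (snd q) - fst (snd p) * snd (snd (snd q))),
  fst p * snd (snd (snd q)) + fst q * snd (snd (snd p)) - (fst (snd p) * fst (snd (snd q)) - fst (snd (snd p)) * fst (snd q)))"
  by (cases p rule: prod_cases4; cases q rule: prod_cases4) (simp add: qmul_def)

lemma qmul_cont[continuous_intros]:
  "continuous_on S f \<Longrightarrow> continuous_on S g \<Longrightarrow> continuous_on S (\<lambda>x. qmul (f x) (g x))"
  unfolding qmul_alt by (intro continuous_intros)

lemma qconj_cont[continuous_intros]: "continuous_on S f \<Longrightarrow> continuous_on S (\<lambda>x. qconj (f x))"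
proof -
  have "qconj p = (fst p, - fst (snd p), - fst (snd (snd p)), - snd (snd (snd p)))" for p
    by (cases p rule: prod_cases4) (simp add: qconj_def)
  thus "continuous_on S f \<Longrightarrow> continuous_on S (\<lambda>x. qconj (f x))" by (simp only:) (intro continuous_intros)
qed

lemma im_cont[continuous_intros]: "continuous_on S f \<Longrightarrow> continuous_on S (\<lambda>x. im (f x))"
  unfolding im_def by (intro continuous_intros)

lemma vec3_cont[continuous_intros]: assumes "continuous_on S f" "continuous_on S g" "continuous_on S h" shows
   "continuous_on S (\<lambda>x. vec3 (f x) (g x) (h x))"
  unfolding vec3_def
proof (intro continuous_on_vec_lambda)
  fix i :: 3
  show "continuous_on S (\<lambda>x. if i = 1 then f x else if i = 2 then g x else h x)"
    by (cases "i = 1"; cases "i = 2") (simp_all add: assms)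
qed

lemma qv_cont[continuous_intros]: "continuous_on S f \<Longrightarrow> continuous_on S (\<lambda>x. qv (f x))"
  unfolding qv_def by (intro continuous_intros)

definition nn :: "real\<times>real\<times>real\<times>real \<Rightarrow> real\<times>real\<times>real\<times>real \<Rightarrow> real" where
  "nn h a = (let u = h - (- fst (qmul h a)) *\<^sub>R a in - fst (qmul u u))"

lemma Gq_cont:
  assumes "continuous_on S fA" "continuous_on S fh" "continuous_on S fa" "\<forall>x\<in>S. nn (fh x) (fa x) > 0"
  shows "continuous_on S (\<lambda>x. Gq (fA x) (fh x) (fa x))"
  using assms unfolding Gq_def Let_def nn_def
  by (intro continuous_intros) auto


lemma frame:
  assumes e: "0 < e" "e < 1/2" and R: "RepQ e A B a b h w"
  shows "\<exists>g \<alpha> \<beta>. nq g = 1 \<and> cq g a = (0,0,0,1) \<and> cq g h = (0,\<alpha>,0,\<beta>) \<and> \<alpha> > 0"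
proof -
  have na: "nq a = 1" "fst a = 0" using R unfolding RepQ_def by blast+
  obtain g1 where g1: "nq g1 = 1" "cq g1 a = (0,0,0,1)" using step1[OF na] by blast
  have R1: "RepQ e (cq g1 A) (cq g1 B) (0,0,0,1) (cq g1 b) (cq g1 h) (cq g1 w)"
    using RepQ_cq[OF g1(1) R] g1(2) by simp
  have "fst (cq g1 h) = 0" using R1 unfolding RepQ_def by blast
  then obtain h1 h2 h3 where h: "cq g1 h = (0,h1,h2,h3)" by (cases "cq g1 h" rule: prod_cases4) auto
  obtain c v1 v2 v3 where M: "qmul (qconj (0,h1,h2,h3)) (cq g1 A) = (c,v1,v2,v3)"
    by (cases "qmul (qconj (0,h1,h2,h3)) (cq g1 A)" rule: prod_cases4)
  have hp: "h1\<^sup>2+h2\<^sup>2 > 0" using RepQ_k[OF e R1[unfolded h] M] by blast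
  obtain g2 \<alpha> \<beta> where g2: "nq g2 = 1" "cq g2 (0,0,0,1) = (0,0,0,1)" "cq g2 (0,h1,h2,h3) = (0,\<alpha>,0,\<beta>)" "\<alpha> > 0"
    using step2[OF hp] by blast
  define g where "g = qmul g2 g1"
  have ng: "nq g = 1" unfolding g_def using g1 g2 by (simp add: nq_qmul)
  have cg: "cq g p = cq g2 (cq g1 p)" for p unfolding g_def by (simp add: cq_comp)
  have "cq g a = (0,0,0,1)" "cq g h = (0,\<alpha>,0,\<beta>)" unfolding cg using g1 g2 h by simp_all
  thus ?thesis using ng g2(4) by blast
qed

lemma nn_cq: "nq g = 1 \<Longrightarrow> nn (cq g h) (cq g a) = nn h a"
proof -
  assume g: "nq g = 1"
  have f: "fst (qmul (cq g p) (cq g q)) = fst (qmul p q)" for p q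
    using g by (simp add: cq_mul[symmetric] fst_cq)
  have c2: "cq g h - d *\<^sub>R cq g a = cq g (h - d *\<^sub>R a)" for d by (simp add: cq_lin)
  show ?thesis unfolding nn_def Let_def f c2 f ..
qed

lemma nn_pos: assumes e: "0 < e" "e < 1/2" and R: "RepQ e A B a b h w" shows "nn h a > 0"
proof -
  obtain g \<alpha> \<beta> where g: "nq g = 1" "cq g a = (0,0,0,1)" "cq g h = (0,\<alpha>,0,\<beta>)" "\<alpha> > 0"
    using frame[OF e R] by blast
  have "nn h a = nn (0,\<alpha>,0,\<beta>) (0,0,0,1)" using nn_cq[OF g(1), of h a] g by simp
  also have "\<dots> = \<alpha>\<^sup>2" by (simp add: nn_def qmul_def power2_eq_square zero_prod_def)
  finally show ?thesis using g(4) by simp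
qed

lemma Rep_nn: assumes e: "0 < e" "e < 1/2" and x: "x \<in> Rep e"
  shows "nn (qv (fst (snd (snd (snd (snd x)))))) (qv (fst (snd (snd x)))) > 0"
proof -
  obtain A B a b h w where xq: "x = (Q A, Q B, Q a, Q b, Q h, Q w)" and R: "RepQ e A B a b h w"
    using Rep_RepQ[OF x] by blast
  show ?thesis using nn_pos[OF e R] xq by simp
qed

lemma Gm_cont: assumes e: "0 < e" "e < 1/2" shows "continuous_on (Rep e) Gm"
proof -
  have "Gm = (\<lambda>x. Gq (qv (fst x)) (qv (fst (snd (snd (snd (snd x)))))) (qv (fst (snd (snd x)))))"
    by (auto simp: Gm_def fun_eq_iff split: prod.splits)
  moreover have "continuous_on (Rep e) (\<lambda>x. Gq (qv (fst x)) (qv (fst (snd (snd (snd (snd x)))))) (qv (fst (snd (snd x)))))"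
    using Rep_nn[OF e] by (intro Gq_cont continuous_intros) auto
  ultimately show ?thesis by metis
qed

lemma Gm_conj: assumes "x \<in> Rep e" "g \<in> SU2" shows "Gm (conj_tup g x) = Gm x"
proof -
  obtain A B a b h w where xq: "x = (Q A, Q B, Q a, Q b, Q h, Q w)" and R: "RepQ e A B a b h w"
    using Rep_RepQ[OF assms(1)] by blast
  obtain gq where g: "g = Q gq" "nq gq = 1" using SU2_Q[OF assms(2)] by blast
  show ?thesis unfolding xq g(1) conj_tup_Q[OF g(2)] Gm_def by (simp add: Gq_cq[OF g(2)])
qed


lemma sg_isCont: "isCont (sg e) x"
proof (cases "x = 0")
  case False
  have "eventually (\<lambda>y. y \<in> -{0}) (nhds x)" using False by (intro eventually_nhds_in_open) auto
  hence ev: "eventually (\<lambda>y. sg e y = sin (e * y) / y) (nhds x)"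
    by (rule eventually_mono) (simp add: sg_def)
  have "isCont (\<lambda>y. sin (e * y) / y) x" using False by (intro continuous_intros) auto
  thus ?thesis using isCont_cong[OF ev] by simp
next
  case True
  have d: "DERIV (\<lambda>y. sin (e * y)) 0 :> e"
    by (auto intro!: derivative_eq_intros)
  have l: "(\<lambda>h. sin (e * h) / h) \<midarrow>0\<rightarrow> e" using DERIV_D[OF d] by simp
  have ev: "eventually (\<lambda>y. sg e y = sin (e * y) / y) (at 0)"
    by (auto simp: eventually_at_filter sg_def)
  have "(sg e \<longlongrightarrow> e) (at 0)" using tendsto_cong[OF ev] l by simp
  thus ?thesis using True by (simp add: isCont_def sg_def)
qed

lemma sg_cont[continuous_intros]: "continuous_on S f \<Longrightarrow> continuous_on S (\<lambda>x. sg e (f x))"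
  by (rule continuous_on_compose2[of UNIV "sg e"]) (auto intro: continuous_at_imp_continuous_on sg_isCont)

lemma Q_decomp: "Q p = fst p *\<^sub>R Q(1,0,0,0) + fst (snd p) *\<^sub>R Q(0,1,0,0) + fst (snd (snd p)) *\<^sub>R Q(0,0,1,0) + snd (snd (snd p)) *\<^sub>R Q(0,0,0,1)"
  by (cases p rule: prod_cases4) (simp add: cmat_eq_iff Q_def complex_eq_iff)

lemma Q_cont[continuous_intros]: "continuous_on S f \<Longrightarrow> continuous_on S (\<lambda>x. Q (f x))"
  by (subst Q_decomp) (intro continuous_intros)

definition "s_of (p::real^3) = sqrt((p$1)\<^sup>2+(p$2)\<^sup>2)"
definition "N_of e p = sqrt((cos (e * s_of p))\<^sup>2 + (sg e (s_of p) * p$2)\<^sup>2)"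
definition "hq_of e p = (0, cos (e * s_of p)/N_of e p, 0, -(sg e (s_of p) * p$2)/N_of e p)"

lemma Pm_explicit:
  assumes e: "0 < e" "e < 1/2" and p: "p \<in> sphere 0 1"
  shows "Pm e p = (Q (qmul (hq_of e p) (p$3,p$1,p$2,0)), Q(cos (e * s_of p), sg e (s_of p) * p$1, sg e (s_of p) * p$2, 0),
     Q(0,0,0,1), Q(qmul (qmul (hq_of e p) (0,0,0,1)) (qconj (hq_of e p))), Q (hq_of e p), Q(-1,0,0,0))"
proof -
  have sp: "(p$1)\<^sup>2+(p$2)\<^sup>2+(p$3)\<^sup>2 = 1" using p sphere3 by blast
  have "(p$1)\<^sup>2+(p$2)\<^sup>2 \<le> 1" using sp zero_le_power2[of "p$3"] by linarith
  hence s1: "s_of p \<le> 1" unfolding s_of_def by simp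
  have cp: "cos (e * s_of p) > 0" using e s1 by (intro cos_pos_small) (simp_all add: s_of_def)
  show ?thesis unfolding Pm_def Let_def s_of_def[symmetric] pg_Q[OF cp] hq_of_def N_of_def ..
qed

lemma N_of_pos: assumes e: "0 < e" "e < 1/2" and p: "p \<in> sphere 0 1" shows "N_of e p > 0"
proof -
  have sp: "(p$1)\<^sup>2+(p$2)\<^sup>2+(p$3)\<^sup>2 = 1" using p sphere3 by blast
  have "(p$1)\<^sup>2+(p$2)\<^sup>2 \<le> 1" using sp zero_le_power2[of "p$3"] by linarith
  hence s1: "s_of p \<le> 1" unfolding s_of_def by simp
  have cp: "cos (e * s_of p) > 0" using e s1 by (intro cos_pos_small) (simp_all add: s_of_def)
  thus ?thesis unfolding N_of_def by (simp add: add_pos_nonneg)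
qed

lemma Pm_cont: assumes e: "0 < e" "e < 1/2" shows "continuous_on (sphere 0 1) (Pm e)"
proof -
  have c1: "continuous_on (sphere 0 1) s_of" unfolding s_of_def by (intro continuous_intros)
  have c2: "continuous_on (sphere 0 1) (N_of e)" unfolding N_of_def s_of_def by (intro continuous_intros)
  have c3: "continuous_on (sphere 0 1) (hq_of e)"
  proof -
    have nz: "\<forall>p\<in>sphere 0 1. N_of e p \<noteq> 0" using N_of_pos[OF e] by (metis less_irrefl)
    show ?thesis using c1 c2 nz unfolding hq_of_def by (intro continuous_intros) auto
  qed
  have c: "continuous_on (sphere 0 1) (\<lambda>p. (Q (qmul (hq_of e p) (p$3,p$1,p$2,0)), Q(cos (e * s_of p), sg e (s_of p) * p$1, sg e (s_of p) * p$2, 0),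
     Q(0,0,0,1), Q(qmul (qmul (hq_of e p) (0,0,0,1)) (qconj (hq_of e p))), Q (hq_of e p), Q(-1::real,0::real,0::real,0::real)))"
    using c1 c3 by (intro continuous_intros)
  show ?thesis by (rule continuous_on_eq[OF c]) (simp add: Pm_explicit[OF e])
qed


lemma Rep_Qtup: "x \<in> Rep e \<Longrightarrow> \<exists>A B a b h w. x = (Q A, Q B, Q a, Q b, Q h, Q w)"
  using Rep_RepQ by blast

lemma cq_one: "cq (1,0,0,0) p = p" by (simp add: cq_def qmul_one)

lemma conj_equiv: "equiv (Rep e) (conj_rel (Rep e))"
proof (rule equivI)
  show "conj_rel (Rep e) \<subseteq> Rep e \<times> Rep e" by (auto simp: conj_rel_def)
  show "refl_on (Rep e) (conj_rel (Rep e))"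
  proof (rule refl_onI)
    fix x assume x: "x \<in> Rep e"
    then obtain A B a b h w where xq: "x = (Q A, Q B, Q a, Q b, Q h, Q w)" using Rep_Qtup by blast
    have "x = conj_tup (Q (1,0,0,0)) x" unfolding xq by (simp add: conj_tup_Q nq_def cq_one)
    moreover have "Q (1,0,0,0) \<in> SU2" by (rule Q_SU2) (simp add: nq_def)
    ultimately show "(x,x) \<in> conj_rel (Rep e)" using x unfolding conj_rel_def by blast
  qed
  show "sym (conj_rel (Rep e))"
  proof (rule symI)
    fix x y assume "(x,y) \<in> conj_rel (Rep e)"
    then obtain g where x: "x \<in> Rep e" and y: "y \<in> Rep e" and g: "g \<in> SU2" and yx: "y = conj_tup g x"
      unfolding conj_rel_def by blast
    obtain gq where gq: "g = Q gq" "nq gq = 1" using SU2_Q[OF g] by blast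
    obtain A B a b h w where xq: "x = (Q A, Q B, Q a, Q b, Q h, Q w)" using Rep_Qtup[OF x] by blast
    have "x = conj_tup (Q (qconj gq)) y" unfolding yx xq gq(1) conj_tup_Q[OF gq(2)]
      using gq(2) by (simp add: conj_tup_Q cq_inv)
    moreover have "Q (qconj gq) \<in> SU2" using gq(2) by (intro Q_SU2) simp
    ultimately show "(y,x) \<in> conj_rel (Rep e)" using x y unfolding conj_rel_def by blast
  qed
  show "trans (conj_rel (Rep e))"
  proof (rule transI)
    fix x y z assume "(x,y) \<in> conj_rel (Rep e)" "(y,z) \<in> conj_rel (Rep e)"
    then obtain g1 g2 where x: "x \<in> Rep e" and z: "z \<in> Rep e" and g: "g1 \<in> SU2" "g2 \<in> SU2"
      and yx: "y = conj_tup g1 x" and zy: "z = conj_tup g2 y"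
      unfolding conj_rel_def by blast
    obtain gq1 where gq1: "g1 = Q gq1" "nq gq1 = 1" using SU2_Q[OF g(1)] by blast
    obtain gq2 where gq2: "g2 = Q gq2" "nq gq2 = 1" using SU2_Q[OF g(2)] by blast
    obtain A B a b h w where xq: "x = (Q A, Q B, Q a, Q b, Q h, Q w)" using Rep_Qtup[OF x] by blast
    have n: "nq (qmul gq2 gq1) = 1" using gq1 gq2 by (simp add: nq_qmul)
    have "z = conj_tup (Q (qmul gq2 gq1)) x" unfolding zy yx xq gq1(1) gq2(1) conj_tup_Q[OF gq1(2)] conj_tup_Q[OF gq2(2)]
      conj_tup_Q[OF n] by (simp add: cq_comp)
    moreover have "Q (qmul gq2 gq1) \<in> SU2" using n by (rule Q_SU2)
    ultimately show "(x,z) \<in> conj_rel (Rep e)" using x z unfolding conj_rel_def by blast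
  qed
qed

lemma qt_istopology:
  assumes eq: "equiv S r"
  shows "istopology (\<lambda>U. U \<subseteq> S // r \<and> openin (top_of_set S) (\<Union>U))"
proof -
  have int: "U \<inter> V \<subseteq> S // r \<and> openin (top_of_set S) (\<Union>(U \<inter> V))"
    if U: "U \<subseteq> S // r \<and> openin (top_of_set S) (\<Union>U)" and V: "V \<subseteq> S // r \<and> openin (top_of_set S) (\<Union>V)" for U V
  proof -
    have "\<Union>(U \<inter> V) = \<Union>U \<inter> \<Union>V"
    proof
      show "\<Union>(U \<inter> V) \<subseteq> \<Union>U \<inter> \<Union>V" by blast
      show "\<Union>U \<inter> \<Union>V \<subseteq> \<Union>(U \<inter> V)"
      proof
        fix x assume "x \<in> \<Union>U \<inter> \<Union>V"
        then obtain X Y where "X \<in> U" "Y \<in> V" "x \<in> X" "x \<in> Y" by blast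
        moreover hence "X = Y" using quotient_disj[OF eq, of X Y] U V by blast
        ultimately show "x \<in> \<Union>(U \<inter> V)" by blast
      qed
    qed
    thus ?thesis using U V by auto
  qed
  have un: "\<Union>K \<subseteq> S // r \<and> openin (top_of_set S) (\<Union>(\<Union>K))"
    if K: "\<forall>U\<in>K. U \<subseteq> S // r \<and> openin (top_of_set S) (\<Union>U)" for K
  proof -
    have "\<Union>(\<Union>K) = \<Union>((\<lambda>U. \<Union>U) ` K)" by blast
    moreover have "openin (top_of_set S) (\<Union>((\<lambda>U. \<Union>U) ` K))" using K by (intro openin_Union) auto
    ultimately show ?thesis using K by auto
  qed
  show ?thesis unfolding istopology_def using int un by blast
qed

lemma charvar_open: "openin (charvar e) U \<longleftrightarrow> U \<subseteq> Rep e // conj_rel (Rep e) \<and> openin (top_of_set (Rep e)) (\<Union>U)"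
  unfolding charvar_def quotient_topology_def topspace_subtopology
  using qt_istopology[OF conj_equiv] by simp

lemma charvar_topspace: "topspace (charvar e) = Rep e // conj_rel (Rep e)"
proof
  show "topspace (charvar e) \<subseteq> Rep e // conj_rel (Rep e)" unfolding topspace_def charvar_open by blast
  have "openin (charvar e) (Rep e // conj_rel (Rep e))"
    unfolding charvar_open Union_quotient[OF conj_equiv] by simp
  thus "Rep e // conj_rel (Rep e) \<subseteq> topspace (charvar e)" by (rule openin_subset)
qed


lemma sph_sphere: "sph \<phi> \<theta> \<in> sphere 0 1"
proof -
  have "(sin \<phi> * cos \<theta>)\<^sup>2 + (sin \<phi> * sin \<theta>)\<^sup>2 = (sin \<phi>)\<^sup>2"
    by (simp add: power_mult_distrib flip: distrib_left)
  thus ?thesis unfolding sphere3 sph_def vector_3 by simp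
qed

lemma class_conj: assumes "(x,y) \<in> conj_rel (Rep e)" shows "Gm y = Gm x"
proof -
  obtain g where "x \<in> Rep e" "g \<in> SU2" "y = conj_tup g x" using assms unfolding conj_rel_def by blast
  thus ?thesis using Gm_conj by blast
qed

theorem theorem2p13:
  "\<exists>eps0>0. \<forall>eps. 0 < eps \<and> eps < eps0 \<longrightarrow>
     (\<forall>\<phi> \<theta>. 0 \<le> \<phi> \<and> \<phi> \<le> pi \<and> 0 \<le> \<theta> \<and> \<theta> \<le> 2 * pi \<longrightarrow> param eps \<phi> \<theta> \<in> Rep eps) \<and>
     (\<exists>F. homeomorphic_map (subtopology euclidean (sphere (0::real^3) 1)) (charvar eps) F \<and>
          (\<forall>\<phi> \<theta>. 0 \<le> \<phi> \<and> \<phi> \<le> pi \<and> 0 \<le> \<theta> \<and> \<theta> \<le> 2 * pi \<longrightarrow>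
             F (sph \<phi> \<theta>) = conj_rel (Rep eps) `` {param eps \<phi> \<theta>}))"
proof (rule exI[of _ "1/2"], rule conjI, simp, rule allI, rule impI, rule conjI)
  fix e :: real assume ee: "0 < e \<and> e < 1/2"
  hence e: "0 < e" "e < 1/2" by auto
  show "\<forall>\<phi> \<theta>. 0 \<le> \<phi> \<and> \<phi> \<le> pi \<and> 0 \<le> \<theta> \<and> \<theta> \<le> 2 * pi \<longrightarrow> param e \<phi> \<theta> \<in> Rep e"
  proof (intro allI impI)
    fix \<phi> \<theta> assume h: "0 \<le> \<phi> \<and> \<phi> \<le> pi \<and> 0 \<le> \<theta> \<and> \<theta> \<le> 2 * pi"
    have "param e \<phi> \<theta> = Pm e (sph \<phi> \<theta>)" using param_Pm h by blast
    thus "param e \<phi> \<theta> \<in> Rep e" using Pm_Rep[OF e sph_sphere] by simp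
  qed
next
  fix e :: real assume ee: "0 < e \<and> e < 1/2"
  hence e: "0 < e" "e < 1/2" by auto
  define R where "R = Rep e"
  define r where "r = conj_rel R"
  define S where "S = (sphere (0::real^3) 1)"
  have eq: "equiv R r" unfolding R_def r_def by (rule conj_equiv)
  define F where "F = (\<lambda>p. r `` {Pm e p})"
  define Gt where "Gt = (\<lambda>C. Gm (SOME x. x \<in> C))"
  have PmR: "Pm e p \<in> R" if "p \<in> S" for p using Pm_Rep[OF e] that unfolding R_def S_def by blast
  have GmS: "Gm x \<in> S" if "x \<in> R" for x using reduce[OF e] that unfolding R_def S_def by blast
  have cls: "Gt (r``{x}) = Gm x" if x: "x \<in> R" for x
  proof -
    have "x \<in> r``{x}" using equiv_class_self[OF eq x] .
    hence "(SOME y. y \<in> r``{x}) \<in> r``{x}" by (rule someI)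
    hence "(x, SOME y. y \<in> r``{x}) \<in> r" by simp
    thus ?thesis unfolding Gt_def r_def R_def by (rule class_conj)
  qed
  have top1: "topspace (charvar e) = R // r" unfolding R_def r_def by (rule charvar_topspace)
  have cF: "continuous_map (top_of_set S) (charvar e) F"
    unfolding continuous_map
  proof (intro conjI allI impI)
    show "F ` topspace (top_of_set S) \<subseteq> topspace (charvar e)"
      unfolding top1 F_def using PmR by (auto intro: quotientI)
    fix U assume U: "openin (charvar e) U"
    hence U1: "U \<subseteq> R // r" and U2: "openin (top_of_set R) (\<Union>U)"
      unfolding charvar_open R_def r_def by auto
    have "{p \<in> topspace (top_of_set S). F p \<in> U} = {p \<in> topspace (top_of_set S). Pm e p \<in> \<Union>U}"
    proof (rule Collect_cong, rule conj_cong[OF refl])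
      fix p assume "p \<in> topspace (top_of_set S)"
      hence p: "Pm e p \<in> R" using PmR by simp
      show "F p \<in> U \<longleftrightarrow> Pm e p \<in> \<Union>U"
      proof
        assume "F p \<in> U" thus "Pm e p \<in> \<Union>U" unfolding F_def using equiv_class_self[OF eq p] by blast
      next
        assume "Pm e p \<in> \<Union>U"
        then obtain X where X: "X \<in> U" "Pm e p \<in> X" by blast
        have "X \<in> R // r" using X(1) U1 by blast
        then obtain y where y: "X = r``{y}" "y \<in> R" by (metis quotientE)
        hence "(y, Pm e p) \<in> r" using X by simp
        hence "r``{y} = r``{Pm e p}" by (rule equiv_class_eq[OF eq])
        thus "F p \<in> U" unfolding F_def using X y by simp
      qed
    qed
    moreover have cP: "continuous_map (top_of_set S) (top_of_set R) (Pm e)"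
    proof -
      have "continuous_on S (Pm e)" using Pm_cont[OF e] unfolding S_def .
      moreover have "Pm e \<in> S \<rightarrow> R" using PmR by blast
      ultimately show ?thesis using continuous_map_subtopology_eu[of S R "Pm e"] by blast
    qed
    ultimately show "openin (top_of_set S) {p \<in> topspace (top_of_set S). F p \<in> U}"
      using openin_continuous_map_preimage[OF cP U2] by simp
  qed
  have cG: "continuous_map (charvar e) (top_of_set S) Gt"
    unfolding continuous_map
  proof (intro conjI allI impI)
    show "Gt ` topspace (charvar e) \<subseteq> topspace (top_of_set S)"
    proof
      fix y assume "y \<in> Gt ` topspace (charvar e)"
      then obtain C where C: "C \<in> R // r" "y = Gt C" unfolding top1 by blast
      from C(1) obtain x where x: "C = r``{x}" "x \<in> R" by (metis quotientE)
      have "y = Gm x" using C(2) x cls by simp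
      thus "y \<in> topspace (top_of_set S)" using GmS[OF x(2)] by simp
    qed
    fix V assume V: "openin (top_of_set S) V"
    have un: "\<Union>{C \<in> topspace (charvar e). Gt C \<in> V} = {x \<in> topspace (top_of_set R). Gm x \<in> V}"
    proof
      show "\<Union>{C \<in> topspace (charvar e). Gt C \<in> V} \<subseteq> {x \<in> topspace (top_of_set R). Gm x \<in> V}"
      proof
        fix x assume "x \<in> \<Union>{C \<in> topspace (charvar e). Gt C \<in> V}"
        then obtain C where C: "C \<in> R // r" "Gt C \<in> V" "x \<in> C" unfolding top1 by blast
        from C(1) obtain y where y: "C = r``{y}" "y \<in> R" by (metis quotientE)
        have "(y,x) \<in> r" using C y by simp
        hence "x \<in> R" "Gm x = Gm y" using class_conj unfolding r_def R_def conj_rel_def by blast+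
        thus "x \<in> {x \<in> topspace (top_of_set R). Gm x \<in> V}" using C y cls by simp
      qed
      show "{x \<in> topspace (top_of_set R). Gm x \<in> V} \<subseteq> \<Union>{C \<in> topspace (charvar e). Gt C \<in> V}"
      proof
        fix x assume "x \<in> {x \<in> topspace (top_of_set R). Gm x \<in> V}"
        hence x: "x \<in> R" "Gm x \<in> V" by auto
        have "r``{x} \<in> topspace (charvar e)" unfolding top1 using x(1) by (rule quotientI)
        moreover have "x \<in> r``{x}" using equiv_class_self[OF eq x(1)] .
        moreover have "Gt (r``{x}) \<in> V" using cls[OF x(1)] x(2) by simp
        ultimately show "x \<in> \<Union>{C \<in> topspace (charvar e). Gt C \<in> V}" by blast
      qed
    qed
    have cGm: "continuous_map (top_of_set R) (top_of_set S) Gm"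
    proof -
      have "continuous_on R Gm" using Gm_cont[OF e] unfolding R_def .
      moreover have "Gm \<in> R \<rightarrow> S" using GmS by blast
      ultimately show ?thesis using continuous_map_subtopology_eu[of R S Gm] by blast
    qed
    have "openin (top_of_set R) {x \<in> topspace (top_of_set R). Gm x \<in> V}"
      by (rule openin_continuous_map_preimage[OF cGm V])
    hence o: "openin (top_of_set (Rep e)) (\<Union>{C \<in> topspace (charvar e). Gt C \<in> V})"
      unfolding un R_def .
    have sub: "{C \<in> topspace (charvar e). Gt C \<in> V} \<subseteq> Rep e // conj_rel (Rep e)"
      using top1 unfolding R_def r_def by blast
    show "openin (charvar e) {C \<in> topspace (charvar e). Gt C \<in> V}"
      unfolding charvar_open using sub o by blast
  qed
  have inv1: "\<forall>p\<in>topspace (top_of_set S). Gt (F p) = p"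
  proof
    fix p assume "p \<in> topspace (top_of_set S)"
    hence p: "p \<in> S" by simp
    have "Gt (F p) = Gm (Pm e p)" unfolding F_def using cls[OF PmR[OF p]] .
    also have "\<dots> = p" using Gm_Pm[OF e] p unfolding S_def by blast
    finally show "Gt (F p) = p" .
  qed
  have inv2: "\<forall>C\<in>topspace (charvar e). F (Gt C) = C"
  proof
    fix C assume "C \<in> topspace (charvar e)"
    then obtain x where x: "C = r``{x}" "x \<in> R" unfolding top1 by (metis quotientE)
    obtain g where g: "g \<in> SU2" "Pm e (Gm x) = conj_tup g x" and gs: "Gm x \<in> S"
      using reduce[OF e] x(2) unfolding R_def S_def by blast
    have "(x, Pm e (Gm x)) \<in> r" unfolding r_def conj_rel_def using x(2) PmR[OF gs] g by blast
    hence eqc: "r``{x} = r``{Pm e (Gm x)}" by (rule equiv_class_eq[OF eq])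
    have gc: "Gt C = Gm x" using cls[OF x(2)] x(1) by simp
    have "F (Gt C) = r``{Pm e (Gm x)}" unfolding F_def gc ..
    thus "F (Gt C) = C" using eqc x(1) by simp
  qed
  have "homeomorphic_map (top_of_set S) (charvar e) F"
    unfolding homeomorphic_map_maps homeomorphic_maps_def using cF cG inv1 inv2 by blast
  moreover have "\<forall>\<phi> \<theta>. 0 \<le> \<phi> \<and> \<phi> \<le> pi \<and> 0 \<le> \<theta> \<and> \<theta> \<le> 2 * pi \<longrightarrow>
             F (sph \<phi> \<theta>) = conj_rel (Rep e) `` {param e \<phi> \<theta>}"
  proof (intro allI impI)
    fix \<phi> \<theta> assume h: "0 \<le> \<phi> \<and> \<phi> \<le> pi \<and> 0 \<le> \<theta> \<and> \<theta> \<le> 2 * pi"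
    have "param e \<phi> \<theta> = Pm e (sph \<phi> \<theta>)" using param_Pm h by blast
    thus "F (sph \<phi> \<theta>) = conj_rel (Rep e) `` {param e \<phi> \<theta>}" unfolding F_def r_def R_def by simp
  qed
  ultimately show "\<exists>F. homeomorphic_map (top_of_set (sphere (0::real^3) 1)) (charvar e) F \<and>
          (\<forall>\<phi> \<theta>. 0 \<le> \<phi> \<and> \<phi> \<le> pi \<and> 0 \<le> \<theta> \<and> \<theta> \<le> 2 * pi \<longrightarrow>
             F (sph \<phi> \<theta>) = conj_rel (Rep e) `` {param e \<phi> \<theta>})" unfolding S_def by blast
qed

end
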